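(* The parameterised problem $\#\ell\text{-left-BIS}$ (parameterised by $\ell$) is $\#\mathrm{W}[2]$-hard.
   Context: A bipartite graph is given as a triple $G=(U,V,E)$ with $(U,V)$ a partition of the vertices and $E\subseteq U\times V$. An independent set $S$ of $G$ is $\ell$-left if $|S\cap U|=\ell$. The problem $\#\ell\text{-left-BIS}$: given a bipartite graph $G=(U,V,E)$ and a non-negative integer $\ell$ (the parameter), output the number of $\ell$-left independent sets of $G$. For parameterised problems $F,G$: an FPT Turing reduction from $F$ to $G$ is an oracle algorithm for $F$ using an oracle for $G$ that runs in time $f(k)\cdot|x|^c$ on instances $x$ with parameter $k$ (for computable $f$ and constant $c$), such that each oracle query has parameter at most $g(k)$ for some computable $g$. $\#k\text{-DomSet}$: given a graph $G$ and positive integer $k$ (the parameter), output the number of dominating sets of $G$ of size $k$ (a set $D$ is dominating if every vertex is in $D$ or adjacent to a vertex of $D$). A problem is $\#\mathrm{W}[2]$-hard if there is an FPT Turing reduction from $\#k\text{-DomSet}$ to it. *)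

theory Defs
  imports Main
begin

text \<open>Natural numbers in unary (self-delimiting), used inside instance encodings.\<close>
definition un :: "nat \<Rightarrow> bool list" where
  "un n = replicate n True @ [False]"

fun bin :: "nat \<Rightarrow> bool list" where
  "bin n = (if n = 0 then [] else odd n # bin (n div 2))"

record 'a cprob =
  inst :: "'a set"
  enc  :: "'a \<Rightarrow> bool list"
  sol  :: "'a \<Rightarrow> nat"
  par  :: "'a \<Rightarrow> nat"

text \<open>Tape symbols are natural numbers: 0 = blank, 1 = bit False, 2 = bit True.
  A tape is a map from positions (integers) to symbols.\<close>

record otm =
  nstates :: nat
  nsyms   :: nat
  start   :: nat
  halt    :: nat
  qry     :: nat
  ans     :: nat
  delta   :: "nat \<Rightarrow> nat \<Rightarrow> nat \<Rightarrow> nat \<times> nat \<times> int \<times> nat \<times> int"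
  \<comment> \<open>state, work symbol, oracle symbol \<mapsto> new state, written work symbol,
      work head move, written oracle symbol, oracle head move\<close>

definition wf_otm :: "otm \<Rightarrow> bool" where
  "wf_otm M \<longleftrightarrow> 3 \<le> nsyms M \<and>
     start M < nstates M \<and> halt M < nstates M \<and> qry M < nstates M \<and> ans M < nstates M \<and>
     (\<forall>q s r. q < nstates M \<and> s < nsyms M \<and> r < nsyms M \<longrightarrow>
        (case delta M q s r of (q', s', d, r', e) \<Rightarrow>
           q' < nstates M \<and> s' < nsyms M \<and> r' < nsyms M \<and>
           d \<in> {-1, 0, 1} \<and> e \<in> {-1, 0, 1}))"

type_synonym tape = "int \<Rightarrow> nat"
type_synonym config = "nat \<times> tape \<times> int \<times> tape \<times> int"
  \<comment> \<open>state, work tape, work head, oracle tape, oracle head\<close>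

definition tape_of :: "bool list \<Rightarrow> tape" where
  "tape_of w = (\<lambda>i. if 0 \<le> i \<and> nat i < length w then (if w ! nat i then 2 else 1) else 0)"

definition read_tape :: "tape \<Rightarrow> bool list" where
  "read_tape tp = (let n = (LEAST n. tp (int n) \<notin> {1, 2}) in map (\<lambda>i. tp (int i) = 2) [0..<n])"

definition init_config :: "otm \<Rightarrow> bool list \<Rightarrow> config" where
  "init_config M w = (start M, tape_of w, 0, (\<lambda>_. 0), 0)"

definition step :: "(bool list \<Rightarrow> bool list) \<Rightarrow> otm \<Rightarrow> config \<Rightarrow> config" where
  "step orc M c = (case c of (q, wt, h, ot, g) \<Rightarrow>
     if q = halt M then c
     else if q = qry M then (ans M, wt, h, tape_of (orc (read_tape ot)), 0)
     else (case delta M q (wt h) (ot g) of (q', s', d, r', e) \<Rightarrow>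
             (q', wt(h := s'), h + d, ot(g := r'), g + e)))"

definition run :: "(bool list \<Rightarrow> bool list) \<Rightarrow> otm \<Rightarrow> bool list \<Rightarrow> nat \<Rightarrow> config" where
  "run orc M w t = (step orc M ^^ t) (init_config M w)"

definition cstate :: "config \<Rightarrow> nat" where "cstate c = fst c"
definition cwork :: "config \<Rightarrow> tape" where "cwork c = fst (snd c)"
definition coracle :: "config \<Rightarrow> tape" where "coracle c = fst (snd (snd (snd c)))"

definition computable :: "(nat \<Rightarrow> nat) \<Rightarrow> bool" where
  "computable f \<longleftrightarrow> (\<exists>M. wf_otm M \<and> (\<forall>n. \<exists>t.
      cstate (run (\<lambda>_. []) M (bin n) t) = halt M \<and>
      read_tape (cwork (run (\<lambda>_. []) M (bin n) t)) = bin (f n)))"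

text \<open>An oracle for a counting problem Q: answers every encoded instance with the
  (binary encoding of the) correct count; arbitrary on other words.\<close>
definition is_oracle :: "'b cprob \<Rightarrow> (bool list \<Rightarrow> bool list) \<Rightarrow> bool" where
  "is_oracle Q orc \<longleftrightarrow> (\<forall>y \<in> inst Q. orc (enc Q y) = bin (sol Q y))"

definition fpt_turing_red :: "'a cprob \<Rightarrow> 'b cprob \<Rightarrow> bool" where
  "fpt_turing_red P Q \<longleftrightarrow>
    (\<exists>M f c g. wf_otm M \<and> computable f \<and> computable g \<and>
      (\<forall>orc. is_oracle Q orc \<longrightarrow>
        (\<forall>x \<in> inst P. \<exists>t. t \<le> f (par P x) * length (enc P x) ^ c \<and>
            cstate (run orc M (enc P x) t) = halt M \<and>
            read_tape (cwork (run orc M (enc P x) t)) = bin (sol P x) \<and>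
            (\<forall>i < t. cstate (run orc M (enc P x) i) = qry M \<longrightarrow>
               (\<forall>y \<in> inst Q. read_tape (coracle (run orc M (enc P x) i)) = enc Q y \<longrightarrow>
                  par Q y \<le> g (par P x))))))"

definition is_dominating :: "nat \<Rightarrow> (nat \<times> nat) set \<Rightarrow> nat set \<Rightarrow> bool" where
  "is_dominating n E D \<longleftrightarrow> D \<subseteq> {..<n} \<and> (\<forall>v<n. v \<in> D \<or> (\<exists>u\<in>D. (u, v) \<in> E))"

definition DomSet :: "(nat \<times> (nat \<times> nat) set \<times> nat) cprob" where
  "DomSet = \<lparr> inst = {(n, E, k). E \<subseteq> {..<n} \<times> {..<n} \<and>
                         (\<forall>i j. (i, j) \<in> E \<longrightarrow> (j, i) \<in> E \<and> i \<noteq> j) \<and> 1 \<le> k},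
              enc = (\<lambda>(n, E, k). un n @ un k @
                        map (\<lambda>p. p \<in> E) (List.product [0..<n] [0..<n])),
              sol = (\<lambda>(n, E, k). card {D. is_dominating n E D \<and> card D = k}),
              par = (\<lambda>(n, E, k). k) \<rparr>"

definition bis_U :: "nat \<Rightarrow> (nat + nat) set" where "bis_U a = Inl ` {..<a}"
definition bis_V :: "nat \<Rightarrow> (nat + nat) set" where "bis_V b = Inr ` {..<b}"
definition bis_E :: "(nat \<times> nat) set \<Rightarrow> ((nat + nat) \<times> (nat + nat)) set" where
  "bis_E E = (\<lambda>(i, j). (Inl i, Inr j)) ` E"

definition is_indep :: "nat \<Rightarrow> nat \<Rightarrow> (nat \<times> nat) set \<Rightarrow> (nat + nat) set \<Rightarrow> bool" where
  "is_indep a b E S \<longleftrightarrow> S \<subseteq> bis_U a \<union> bis_V b \<and>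
     (\<forall>u\<in>S. \<forall>v\<in>S. (u, v) \<notin> bis_E E)"

definition LeftBIS :: "(nat \<times> nat \<times> (nat \<times> nat) set \<times> nat) cprob" where
  "LeftBIS = \<lparr> inst = {(a, b, E, l). E \<subseteq> {..<a} \<times> {..<b}},
               enc = (\<lambda>(a, b, E, l). un a @ un b @ un l @
                        map (\<lambda>p. p \<in> E) (List.product [0..<a] [0..<b])),
               sol = (\<lambda>(a, b, E, l). card {S. is_indep a b E S \<and> card (S \<inter> bis_U a) = l}),
               par = (\<lambda>(a, b, E, l). l) \<rparr>"

definition sharpW2_hard :: "'b cprob \<Rightarrow> bool" where
  "sharpW2_hard Q \<longleftrightarrow> fpt_turing_red DomSet Q"

end

theory Submission
  imports Defs
begin


declare bin.simps[simp del]

lemma bin_0[simp]: "bin 0 = []" by (simp add: bin.simps)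
lemma bin_pos: "c > 0 \<Longrightarrow> bin c = odd c # bin (c div 2)" by (simp add: bin.simps)
lemma bin_eq_Nil_iff[simp]: "bin c = [] \<longleftrightarrow> c = 0"
  by (cases "c = 0") (auto simp: bin_pos)

definition strip :: "bool list \<Rightarrow> bool list" where
  "strip xs = rev (dropWhile (\<lambda>b. \<not> b) (rev xs))"

lemma strip_Nil[simp]: "strip [] = []" by (simp add: strip_def)
lemma strip_Cons: "strip (b # xs) = (if strip xs = [] \<and> \<not> b then [] else b # strip xs)"
proof -
  have "dropWhile (\<lambda>b. \<not> b) (rev xs @ [b]) =
        (if dropWhile (\<lambda>b. \<not> b) (rev xs) = [] then dropWhile (\<lambda>b. \<not> b) [b] else dropWhile (\<lambda>b. \<not> b) (rev xs) @ [b])"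
    by (simp add: dropWhile_append)
  then show ?thesis by (auto simp: strip_def)
qed

lemma bin_mod: "bin (c mod 2 ^ n) = strip (take n (bin c))"
proof (induction n arbitrary: c)
  case 0 then show ?case by simp
next
  case (Suc n)
  show ?case
  proof (cases "c = 0")
    case True then show ?thesis by simp
  next
    case False
    let ?x = "c mod 2 ^ Suc n"
    have m2: "?x mod 2 = c mod 2" by (rule mod_mod_cancel) simp
    have ox: "odd ?x = odd c" using m2 by (metis odd_iff_mod_2_eq_one)
    have dx: "?x div 2 = (c div 2) mod 2 ^ n"
      by (simp add: mod_mult2_eq div_mult2_eq mult.commute)
    have x: "?x = (if odd c then 1 else 0) + 2 * ((c div 2) mod 2 ^ n)"
      by (smt (verit, best) dx mod_div_mult_eq mult.commute odd_iff_mod_2_eq_one ox add.commute even_iff_mod_2_eq_zero)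
    have "bin ?x = (if ?x = 0 then [] else odd c # bin ((c div 2) mod 2 ^ n))"
      using bin.simps[of ?x] unfolding ox dx .
    also have "\<dots> = strip (odd c # take n (bin (c div 2)))"
      using Suc.IH[of "c div 2"] x by (auto simp: strip_Cons)
    finally show ?thesis using False by (simp add: bin_pos)
  qed
qed

lemma strip_decomp: "xs = strip xs @ replicate (length xs - length (strip xs)) False"
proof -
  have "rev xs = takeWhile (\<lambda>b. \<not> b) (rev xs) @ dropWhile (\<lambda>b. \<not> b) (rev xs)" by simp
  moreover have "takeWhile (\<lambda>b. \<not> b) (rev xs) = replicate (length (takeWhile (\<lambda>b. \<not> b) (rev xs))) False"
    by (metis (mono_tags, lifting) replicate_length_same set_takeWhileD)
  ultimately have "xs = strip xs @ replicate (length (takeWhile (\<lambda>b. \<not> b) (rev xs))) False"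
    unfolding strip_def by (metis rev_append rev_replicate rev_rev_ident)
  then show ?thesis by (metis add_diff_cancel_left' length_append length_replicate)
qed

lemma strip_last: "strip xs \<noteq> [] \<Longrightarrow> last (strip xs) = True"
  unfolding strip_def
  by (metis (mono_tags, lifting) hd_dropWhile last_rev rev_is_Nil_conv)

lemma strip_len: "length (strip xs) \<le> length xs"
  by (metis le_add1 length_append strip_decomp)

lemma strip_nth: "i < length (strip xs) \<Longrightarrow> strip xs ! i = xs ! i"
  by (metis nth_append strip_decomp)

definition sym :: "bool \<Rightarrow> nat" where "sym b = (if b then 2 else 1)"

lemma read_tape_eq:
  assumes "\<And>i. i < length w \<Longrightarrow> tp (int i) = sym (w ! i)" and "tp (int (length w)) \<notin> {1,2}"
  shows "read_tape tp = w"
proof -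
  have L: "(LEAST n. tp (int n) \<notin> {1, 2}) = length w"
  proof (rule Least_equality)
    show "tp (int (length w)) \<notin> {1, 2}" by fact
    fix y assume "tp (int y) \<notin> {1, 2}"
    then show "length w \<le> y" using assms(1)[of y] by (cases "length w \<le> y") (auto simp: sym_def split: if_splits)
  qed
  show ?thesis unfolding read_tape_def Let_def L
    by (rule nth_equalityI) (auto simp: assms(1) sym_def)
qed

lemma tape_of_nth: "tape_of w = (\<lambda>i. if 0 \<le> i \<and> nat i < length w then sym (w ! nat i) else 0)"
  by (simp add: tape_of_def sym_def fun_eq_iff)

lemma read_tape_tape_of[simp]: "read_tape (tape_of w) = w"
  by (rule read_tape_eq) (auto simp: tape_of_nth)


definition Ecl :: "nat \<Rightarrow> (nat \<times> nat) set \<Rightarrow> (nat \<times> nat) set" where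
  "Ecl n E = {(i, j). i < n \<and> j < n * n \<and> (j mod n = i \<or> (i, j mod n) \<in> E)}"

lemma Ecl_sub: "Ecl n E \<subseteq> {..<n} \<times> {..<n*n}" by (auto simp: Ecl_def)

definition Und :: "nat \<Rightarrow> (nat \<times> nat) set \<Rightarrow> nat set \<Rightarrow> nat set" where
  "Und n E A = {v. v < n \<and> v \<notin> A \<and> (\<forall>u\<in>A. (u, v) \<notin> E)}"

definition Zs :: "nat \<Rightarrow> (nat \<times> nat) set \<Rightarrow> nat set \<Rightarrow> nat set" where
  "Zs n E A = {j. j < n * n \<and> (\<forall>i\<in>A. (i, j) \<notin> Ecl n E)}"

lemma Zs_card:
  assumes "A \<subseteq> {..<n}"
  shows "card (Zs n E A) = n * card (Und n E A)"
proof -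
  have "Zs n E A = (\<lambda>(v, r). r * n + v) ` (Und n E A \<times> {..<n})"
  proof (rule set_eqI, rule iffI)
    fix j assume j: "j \<in> Zs n E A"
    then have jl: "j < n * n" by (simp add: Zs_def)
    then have np: "n > 0" by (cases n) auto
    have "j mod n \<in> Und n E A"
      using j np assms unfolding Zs_def Und_def Ecl_def by auto
    moreover have "j div n < n" using jl by (simp add: less_mult_imp_div_less)
    moreover have "j = (j div n) * n + j mod n" by simp
    ultimately show "j \<in> (\<lambda>(v, r). r * n + v) ` (Und n E A \<times> {..<n})" by force
  next
    fix j assume "j \<in> (\<lambda>(v, r). r * n + v) ` (Und n E A \<times> {..<n})"
    then obtain v r where vr: "v \<in> Und n E A" "r < n" "j = r * n + v" by auto
    then have vn: "v < n" by (simp add: Und_def)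
    have jm: "j mod n = v" using vr vn by simp
    have "j < n * n"
    proof -
      have "r * n + v < r * n + n" using vn by simp
      also have "\<dots> = (r + 1) * n" by simp
      also have "\<dots> \<le> n * n" using vr(2) by (metis Suc_eq_plus1 Suc_leI mult_le_mono1)
      finally show ?thesis using vr by simp
    qed
    then show "j \<in> Zs n E A" using vr(1) jm unfolding Zs_def Und_def Ecl_def by auto
  qed
  moreover have "inj_on (\<lambda>(v, r). r * n + v) (Und n E A \<times> {..<n})"
  proof (rule inj_onI, clarsimp)
    fix v r v' r' assume "v \<in> Und n E A" "r < n" "v' \<in> Und n E A" "r' < n" "r * n + v = r' * n + v'"
    then have "v < n" "v' < n" by (auto simp: Und_def)
    moreover note eq = \<open>r * n + v = r' * n + v'\<close>
    ultimately have vv: "v = v'" by (metis mod_mult_self3 mod_less)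
    then have "r * n = r' * n" using eq by simp
    moreover have "n > 0" using \<open>r < n\<close> by simp
    ultimately show "v = v' \<and> r = r'" using vv by simp
  qed
  moreover have "finite (Und n E A)" by (simp add: Und_def)
  ultimately show ?thesis by (simp add: card_image card_cartesian_product)
qed

lemma bis_count:
  "{S. is_indep n (n*n) (Ecl n E) S \<and> card (S \<inter> bis_U n) = k} =
   (\<lambda>(A, T). Inl ` A \<union> Inr ` T) ` (SIGMA A:{A. A \<subseteq> {..<n} \<and> card A = k}. Pow (Zs n E A))"
proof (rule set_eqI, rule iffI)
  fix S assume S: "S \<in> {S. is_indep n (n*n) (Ecl n E) S \<and> card (S \<inter> bis_U n) = k}"
  define A where "A = {i. Inl i \<in> S}"
  define T where "T = {j. Inr j \<in> S}"
  have Seq: "S = Inl ` A \<union> Inr ` T"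
    unfolding A_def T_def by (auto, metis sum.exhaust_sel imageI mem_Collect_eq)+
  have sub: "S \<subseteq> bis_U n \<union> bis_V (n*n)" and noE: "\<forall>u\<in>S. \<forall>v\<in>S. (u, v) \<notin> bis_E (Ecl n E)"
    using S by (auto simp: is_indep_def)
  have As: "A \<subseteq> {..<n}" using sub by (auto simp: A_def bis_U_def bis_V_def)
  have Ts: "T \<subseteq> {..<n*n}" using sub by (auto simp: T_def bis_U_def bis_V_def)
  have "S \<inter> bis_U n = Inl ` A" using As by (auto simp: Seq bis_U_def)
  then have cA: "card A = k" using S by (simp add: card_image)
  have "T \<subseteq> Zs n E A"
  proof
    fix j assume "j \<in> T"
    moreover have "\<forall>i\<in>A. (i, j) \<notin> Ecl n E"
    proof (intro ballI notI)
      fix i assume "i \<in> A" "(i, j) \<in> Ecl n E"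
      then have "(Inl i, Inr j) \<in> bis_E (Ecl n E)" by (force simp: bis_E_def)
      then show False using noE \<open>i \<in> A\<close> \<open>j \<in> T\<close> by (auto simp: A_def T_def)
    qed
    ultimately show "j \<in> Zs n E A" using Ts by (auto simp: Zs_def)
  qed
  then show "S \<in> (\<lambda>(A, T). Inl ` A \<union> Inr ` T) ` (SIGMA A:{A. A \<subseteq> {..<n} \<and> card A = k}. Pow (Zs n E A))"
    using As cA Seq by blast
next
  fix S assume "S \<in> (\<lambda>(A, T). Inl ` A \<union> Inr ` T) ` (SIGMA A:{A. A \<subseteq> {..<n} \<and> card A = k}. Pow (Zs n E A))"
  then obtain A T where A: "A \<subseteq> {..<n}" "card A = k" and T: "T \<subseteq> Zs n E A" and S: "S = Inl ` A \<union> Inr ` T"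
    by auto
  have "S \<subseteq> bis_U n \<union> bis_V (n*n)" using A T S by (auto simp: bis_U_def bis_V_def Zs_def)
  moreover have "\<forall>u\<in>S. \<forall>v\<in>S. (u, v) \<notin> bis_E (Ecl n E)"
    using T S by (auto simp: bis_E_def Zs_def)
  moreover have "S \<inter> bis_U n = Inl ` A" using A by (auto simp: S bis_U_def)
  ultimately show "S \<in> {S. is_indep n (n*n) (Ecl n E) S \<and> card (S \<inter> bis_U n) = k}"
    using A by (simp add: is_indep_def card_image)
qed

lemma bis_card:
  "card {S. is_indep n (n*n) (Ecl n E) S \<and> card (S \<inter> bis_U n) = k} =
   (\<Sum>A\<in>{A. A \<subseteq> {..<n} \<and> card A = k}. 2 ^ (n * card (Und n E A)))"
proof -
  have fin: "finite {A. A \<subseteq> {..<n} \<and> card A = k}" by (rule finite_subset[of _ "Pow {..<n}"]) auto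
  have finZ: "\<And>A. finite (Zs n E A)" by (simp add: Zs_def)
  have inj: "inj_on (\<lambda>(A, T). Inl ` A \<union> Inr ` T) (SIGMA A:{A. A \<subseteq> {..<n} \<and> card A = k}. Pow (Zs n E A))"
  proof (rule inj_onI, clarsimp)
    fix A T A' T' assume "Inl ` A \<union> Inr ` T = Inl ` A' \<union> Inr ` (T' :: nat set)"
    then have "Inl -` (Inl ` A \<union> Inr ` T) = Inl -` (Inl ` A' \<union> Inr ` T')"
      and "Inr -` (Inl ` A \<union> Inr ` T) = Inr -` (Inl ` A' \<union> Inr ` T')" by simp_all
    then show "A = A' \<and> T = T'" by (auto simp: vimage_Un)
  qed
  have "card {S. is_indep n (n*n) (Ecl n E) S \<and> card (S \<inter> bis_U n) = k} =
        card (SIGMA A:{A. A \<subseteq> {..<n} \<and> card A = k}. Pow (Zs n E A))"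
    unfolding bis_count by (rule card_image[OF inj])
  also have "\<dots> = (\<Sum>A\<in>{A. A \<subseteq> {..<n} \<and> card A = k}. card (Pow (Zs n E A)))"
    by (rule card_SigmaI) (use fin finZ in auto)
  also have "\<dots> = (\<Sum>A\<in>{A. A \<subseteq> {..<n} \<and> card A = k}. 2 ^ (n * card (Und n E A)))"
    by (rule sum.cong) (auto simp: card_Pow finZ Zs_card)
  finally show ?thesis .
qed

lemma dom_count:
  assumes k: "1 \<le> k"
  shows "card {D. is_dominating n E D \<and> card D = k} =
     card {S. is_indep n (n*n) (Ecl n E) S \<and> card (S \<inter> bis_U n) = k} mod 2 ^ n"
proof -
  let ?I = "{A. A \<subseteq> {..<n} \<and> card A = k}"
  have fin: "finite ?I" by (rule finite_subset[of _ "Pow {..<n}"]) auto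
  have domeq: "{D. is_dominating n E D \<and> card D = k} = {A \<in> ?I. Und n E A = {}}"
    by (auto simp: is_dominating_def Und_def)
  have "(\<Sum>A\<in>?I. 2 ^ (n * card (Und n E A))) mod 2 ^ n
      = (\<Sum>A\<in>?I. (2::nat) ^ (n * card (Und n E A)) mod 2 ^ n) mod 2 ^ n"
    by (simp add: mod_sum_eq)
  also have "(\<Sum>A\<in>?I. (2::nat) ^ (n * card (Und n E A)) mod 2 ^ n) = (\<Sum>A\<in>?I. (if Und n E A = {} then 1 else 0) mod 2 ^ n)"
  proof (rule sum.cong[OF refl])
    fix A assume "A \<in> ?I"
    then have "finite (Und n E A)" by (simp add: Und_def)
    show "(2::nat) ^ (n * card (Und n E A)) mod 2 ^ n = (if Und n E A = {} then 1 else 0) mod 2 ^ n"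
    proof (cases "Und n E A = {}")
      case True then show ?thesis by simp
    next
      case False
      then have "card (Und n E A) \<ge> 1" using \<open>finite (Und n E A)\<close> by (simp add: Suc_leI card_gt_0_iff)
      then have "(2::nat) ^ n dvd 2 ^ (n * card (Und n E A))" by (simp add: le_imp_power_dvd)
      then show ?thesis using False by simp
    qed
  qed
  also have "(\<Sum>A\<in>?I. (if Und n E A = {} then 1 else 0) mod (2::nat) ^ n) mod 2 ^ n
      = (\<Sum>A\<in>?I. (if Und n E A = {} then 1 else 0)) mod 2 ^ n"
    by (simp add: mod_sum_eq)
  also have "(\<Sum>A\<in>?I. (if Und n E A = {} then 1 else (0::nat))) = card {A \<in> ?I. Und n E A = {}}"
    using fin by (simp add: sum.If_cases Int_def conj_assoc)
  also have "card {A \<in> ?I. Und n E A = {}} mod 2 ^ n = card {A \<in> ?I. Und n E A = {}}"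
  proof -
    have "{A \<in> ?I. Und n E A = {}} \<subseteq> Pow {..<n} - {{}}" using k by auto
    then have "card {A \<in> ?I. Und n E A = {}} \<le> card (Pow {..<n} - {{}})"
      by (rule card_mono[rotated]) simp
    also have "\<dots> = 2 ^ n - 1" by (simp add: card_Pow)
    finally show ?thesis by (simp add: order_le_less_trans[of _ "2^n - 1"])
  qed
  finally show ?thesis using domeq bis_card by simp
qed


definition osym :: "nat \<Rightarrow> nat" where
  "osym s = (if s \<in> {8, 10, 12, 13} then 2 else 1)"

definition dl :: "nat \<Rightarrow> nat \<Rightarrow> nat \<Rightarrow> nat \<times> nat \<times> int \<times> nat \<times> int" where
  "dl q s r = (
    if q = 0 then (if s = 2 then (1, 11, 1, 2, 1) else if s = 1 then (2, 4, 1, 1, 1) else (26, 0, 0, 0, 0))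
    else if q = 1 then (if s = 2 then (1, 2, 1, 2, 1) else if s = 1 then (2, 4, 1, 1, 1) else (26, 0, 0, 0, 0))
    else if q = 2 then (if s = 2 then (2, 2, 1, r, 0) else if s = 1 then (3, 3, 1, r, 0) else (26, 0, 0, 0, 0))
    else if q = 3 then (if s \<in> {1, 2} then (3, s, 1, 2, 1) else if s = 0 then (4, 0, -1, 1, 1) else (26, 0, 0, 0, 0))
    else if q = 4 then (if s \<in> {1, 2} then (4, s, -1, r, 0) else if s = 3 then (5, 3, -1, r, 0) else (26, 0, 0, 0, 0))
    else if q = 5 then (if s = 2 then (5, 2, -1, r, 0) else if s = 4 then (6, 4, 1, r, 0) else (26, 0, 0, 0, 0))
    else if q = 6 then (if s = 2 then (6, 2, 1, 2, 1) else if s = 3 then (7, 3, -1, 1, 1) else (26, 0, 0, 0, 0))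
    else if q = 7 then (if s \<noteq> 0 then (7, s, -1, r, 0) else (8, 0, 1, r, 0))
    else if q = 8 then (if s \<in> {7, 8, 12} then (8, s, 1, r, 0) else if s \<in> {2, 11} then (9, s, 1, r, 0)
                        else if s = 4 then (15, 4, -1, r, 0) else (26, 0, 0, 0, 0))
    else if q = 9 then (if s \<noteq> 3 then (9, s, 1, r, 0) else (10, 3, 1, r, 0))
    else if q = 10 then (if s = 5 then (10, 5, 1, r, 0) else if s = 1 then (11, 5, -1, r, 0)
                        else if s = 2 then (12, 5, -1, r, 0) else (26, 0, 0, 0, 0))
    else if q = 11 \<or> q = 12 then (if s \<noteq> 0 then (q, s, -1, r, 0) else (q + 2, 0, 1, r, 0))
    else if q = 13 \<or> q = 14 then (if s \<in> {7, 8, 12} then (q, s, 1, r, 0)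
                        else if s = 2 then (8, if q = 13 then 7 else 8, 1, r, 0)
                        else if s = 11 then (8, 12, 1, r, 0) else (26, 0, 0, 0, 0))
    else if q = 15 then (if s \<in> {9, 10, 13} then (15, s, -1, r, 0) else if s \<in> {7, 8, 12} then (16, s, -1, r, 0)
                        else if s = 0 then (19, 0, 1, r, 0) else (26, 0, 0, 0, 0))
    else if q = 16 then (if s \<noteq> 0 then (16, s, -1, r, 0) else (17, 0, 1, r, 0))
    else if q = 17 then (if s \<in> {9, 10, 13} then (17, s, 1, osym s, 1) else if s \<in> {7, 8, 12} then (18, s + 2 - (if s = 12 then 1 else 0), 1, osym s, 1)
                        else (26, 0, 0, 0, 0))
    else if q = 18 then (if s \<in> {7, 8, 9, 10, 12, 13} then (18, s, 1, osym s, 1) else if s = 4 then (15, 4, -1, r, 0)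
                        else (26, 0, 0, 0, 0))
    else if q = 19 then (if s \<in> {9, 10} then (19, 2, 1, r, 0) else if s = 13 then (20, 2, 1, r, 0)
                        else if s = 4 then (22, 4, -1, r, 0) else (26, 0, 0, 0, 0))
    else if q = 20 then (if s \<in> {9, 10} then (21, 11, 1, r, 0) else if s = 4 then (22, 4, -1, r, 0) else (26, 0, 0, 0, 0))
    else if q = 21 then (if s \<in> {9, 10} then (21, 2, 1, r, 0) else if s = 4 then (7, 4, -1, r, 0) else (26, 0, 0, 0, 0))
    else if q = 22 then (if s = 2 then (22, 2, -1, r, 0) else if s = 0 then (23, 0, 1, r, 0) else (26, 0, 0, 0, 0))
    else if q = 24 then (if s = 2 \<and> r \<in> {1, 2} then (24, r, 1, r, 1) else (25, 0, -1, r, 0))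
    else if q = 25 then (if s = 1 then (25, 0, -1, r, 0) else (26, s, 0, r, 0))
    else (26, 0, 0, 0, 0))"

definition Mred :: otm where
  "Mred = \<lparr> nstates = 27, nsyms = 14, start = 0, halt = 26, qry = 23, ans = 24, delta = dl \<rparr>"

lemma Mred_simps[simp]: "nstates Mred = 27" "nsyms Mred = 14" "start Mred = 0" "halt Mred = 26"
  "qry Mred = 23" "ans Mred = 24" "delta Mred = dl"
  by (simp_all add: Mred_def)

lemma wf_Mred: "wf_otm Mred"
  unfolding wf_otm_def by (simp add: dl_def osym_def)


definition reach :: "(bool list \<Rightarrow> bool list) \<Rightarrow> config \<Rightarrow> nat \<Rightarrow> config \<Rightarrow> bool" where
  "reach orc c t c' \<longleftrightarrow> (step orc Mred ^^ t) c = c' \<and> (\<forall>i<t. cstate ((step orc Mred ^^ i) c) \<noteq> 23)"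

lemma reach_0[simp]: "reach orc c 0 c" by (simp add: reach_def)

lemma reach_trans: "reach orc c t1 c' \<Longrightarrow> reach orc c' t2 c'' \<Longrightarrow> reach orc c (t1 + t2) c''"
  unfolding reach_def
proof (intro conjI allI impI)
  assume a: "(step orc Mred ^^ t1) c = c' \<and> (\<forall>i<t1. cstate ((step orc Mred ^^ i) c) \<noteq> 23)"
     and b: "(step orc Mred ^^ t2) c' = c'' \<and> (\<forall>i<t2. cstate ((step orc Mred ^^ i) c') \<noteq> 23)"
  have "(step orc Mred ^^ (t1 + t2)) c = (step orc Mred ^^ t2) ((step orc Mred ^^ t1) c)"
    by (simp only: add.commute[of t1 t2] funpow_add comp_apply)
  then show "(step orc Mred ^^ (t1 + t2)) c = c''" using a b by simp
  fix i assume "i < t1 + t2"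
  show "cstate ((step orc Mred ^^ i) c) \<noteq> 23"
  proof (cases "i < t1")
    case True then show ?thesis using a by simp
  next
    case False
    then have "(step orc Mred ^^ i) c = (step orc Mred ^^ ((i - t1) + t1)) c" by simp
    also have "\<dots> = (step orc Mred ^^ (i - t1)) c'" using a by (simp only: funpow_add comp_apply)
    finally have "(step orc Mred ^^ i) c = (step orc Mred ^^ (i - t1)) c'" .
    then show ?thesis using b \<open>i < t1 + t2\<close> False by simp
  qed
qed

lemma reach_snoc: "reach orc c t c' \<Longrightarrow> cstate c' \<noteq> 23 \<Longrightarrow> reach orc c (Suc t) (step orc Mred c')"
  unfolding reach_def by (auto simp: less_Suc_eq)

lemma step_eq: "q \<noteq> 23 \<Longrightarrow> q \<noteq> 26 \<Longrightarrow>
  step orc Mred (q, wt, h, ot, g) = (case dl q (wt h) (ot g) of (q', s', d, r', e) \<Rightarrow>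
             (q', wt(h := s'), h + d, ot(g := r'), g + e))"
  by (simp add: step_def)

lemma reach_one:
  assumes "q \<noteq> 23" "q \<noteq> 26" "dl q (wt h) (ot g) = (q', s', d, r', e)"
  shows "reach orc (q, wt, h, ot, g) 1 (q', wt(h := s'), h + d, ot(g := r'), g + e)"
  using reach_snoc[of orc "(q, wt, h, ot, g)" 0 "(q, wt, h, ot, g)"] assms by (simp add: step_eq cstate_def)

lemma reach_one':
  assumes "q \<noteq> 23" "q \<noteq> 26" "dl q (wt h) (ot g) = (q', s', d, r', e)"
    "wt' = wt(h := s')" "h' = h + d" "ot' = ot(g := r')" "g' = g + e"
  shows "reach orc (q, wt, h, ot, g) 1 (q', wt', h', ot', g')"
  using reach_one[of q wt h ot g q' s' d r' e orc] assms by simp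

lemma scan_r:
  assumes q: "q \<noteq> 23" "q \<noteq> 26" and P: "\<forall>j<m. wt (h + int j) \<in> P"
    and d: "\<And>s r. s \<in> P \<Longrightarrow> dl q s r = (q, s, 1, r, 0)"
  shows "reach orc (q, wt, h, ot, g) m (q, wt, h + int m, ot, g)"
  using P
proof (induction m)
  case 0 then show ?case by (simp add: reach_def fun_eq_iff)
next
  case (Suc m)
  then have R: "reach orc (q, wt, h, ot, g) m (q, wt, h + int m, ot, g)" by simp
  have c: "wt (h + int m) \<in> P" using Suc.prems by simp
  have "reach orc (q, wt, h, ot, g) (Suc m) (step orc Mred (q, wt, h + int m, ot, g))"
    by (rule reach_snoc[OF R]) (simp add: cstate_def q)
  moreover have "step orc Mred (q, wt, h + int m, ot, g) = (q, wt, h + int (Suc m), ot, g)"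
    using q d c by (simp add: step_eq)
  ultimately show ?case by simp
qed

lemma scan_l:
  assumes q: "q \<noteq> 23" "q \<noteq> 26" and P: "\<forall>j<m. wt (h - int j) \<in> P"
    and d: "\<And>s r. s \<in> P \<Longrightarrow> dl q s r = (q, s, -1, r, 0)"
  shows "reach orc (q, wt, h, ot, g) m (q, wt, h - int m, ot, g)"
  using P
proof (induction m)
  case 0 then show ?case by (simp add: reach_def fun_eq_iff)
next
  case (Suc m)
  then have R: "reach orc (q, wt, h, ot, g) m (q, wt, h - int m, ot, g)" by simp
  have c: "wt (h - int m) \<in> P" using Suc.prems by simp
  have "reach orc (q, wt, h, ot, g) (Suc m) (step orc Mred (q, wt, h - int m, ot, g))"
    by (rule reach_snoc[OF R]) (simp add: cstate_def q)
  moreover have "step orc Mred (q, wt, h - int m, ot, g) = (q, wt, h - int (Suc m), ot, g)"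
    using q d c by (simp add: step_eq)
  ultimately show ?case by simp
qed

lemma scan_r_out:
  assumes q: "q \<noteq> 23" "q \<noteq> 26" and P: "\<forall>j<m. wt (h + int j) \<in> P"
    and d: "\<And>s r. s \<in> P \<Longrightarrow> dl q s r = (q, s, 1, \<chi> s, 1)"
  shows "reach orc (q, wt, h, ot, g) m (q, wt, h + int m, \<lambda>x. if g \<le> x \<and> x < g + int m then \<chi> (wt (h + (x - g))) else ot x, g + int m)"
  using P
proof (induction m)
  case 0 then show ?case by (simp add: reach_def fun_eq_iff)
next
  case (Suc m)
  then have R: "reach orc (q, wt, h, ot, g) m (q, wt, h + int m, \<lambda>x. if g \<le> x \<and> x < g + int m then \<chi> (wt (h + (x - g))) else ot x, g + int m)" by simp
  have c: "wt (h + int m) \<in> P" using Suc.prems by simp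
  have "reach orc (q, wt, h, ot, g) (Suc m) (step orc Mred (q, wt, h + int m, \<lambda>x. if g \<le> x \<and> x < g + int m then \<chi> (wt (h + (x - g))) else ot x, g + int m))"
    by (rule reach_snoc[OF R]) (simp add: cstate_def q)
  moreover have "step orc Mred (q, wt, h + int m, \<lambda>x. if g \<le> x \<and> x < g + int m then \<chi> (wt (h + (x - g))) else ot x, g + int m) = (q, wt, h + int (Suc m), \<lambda>x. if g \<le> x \<and> x < g + int (Suc m) then \<chi> (wt (h + (x - g))) else ot x, g + int (Suc m))"
    using q d c by (auto simp add: step_eq algebra_simps fun_eq_iff)
  ultimately show ?case by simp
qed

lemma scan_r_map:
  assumes q: "q \<noteq> 23" "q \<noteq> 26" and P: "\<forall>j<m. wt (h + int j) \<in> P"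
    and d: "\<And>s r. s \<in> P \<Longrightarrow> dl q s r = (q, \<phi> s, 1, r, 0)"
  shows "reach orc (q, wt, h, ot, g) m (q, \<lambda>x. if h \<le> x \<and> x < h + int m then \<phi> (wt x) else wt x, h + int m, ot, g)"
  using P
proof (induction m)
  case 0 then show ?case by (simp add: reach_def fun_eq_iff)
next
  case (Suc m)
  then have R: "reach orc (q, wt, h, ot, g) m (q, \<lambda>x. if h \<le> x \<and> x < h + int m then \<phi> (wt x) else wt x, h + int m, ot, g)" by simp
  have c: "wt (h + int m) \<in> P" using Suc.prems by simp
  have "reach orc (q, wt, h, ot, g) (Suc m) (step orc Mred (q, \<lambda>x. if h \<le> x \<and> x < h + int m then \<phi> (wt x) else wt x, h + int m, ot, g))"
    by (rule reach_snoc[OF R]) (simp add: cstate_def q)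
  moreover have "step orc Mred (q, \<lambda>x. if h \<le> x \<and> x < h + int m then \<phi> (wt x) else wt x, h + int m, ot, g) = (q, \<lambda>x. if h \<le> x \<and> x < h + int (Suc m) then \<phi> (wt x) else wt x, h + int (Suc m), ot, g)"
    using q d c by (auto simp add: step_eq algebra_simps fun_eq_iff)
  ultimately show ?case by simp
qed

lemma scan_l_map:
  assumes q: "q \<noteq> 23" "q \<noteq> 26" and P: "\<forall>j<m. wt (h - int j) \<in> P"
    and d: "\<And>s r. s \<in> P \<Longrightarrow> dl q s r = (q, \<phi> s, -1, r, 0)"
  shows "reach orc (q, wt, h, ot, g) m (q, \<lambda>x. if h - int m < x \<and> x \<le> h then \<phi> (wt x) else wt x, h - int m, ot, g)"
  using P
proof (induction m)
  case 0 then show ?case by (simp add: reach_def fun_eq_iff)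
next
  case (Suc m)
  then have R: "reach orc (q, wt, h, ot, g) m (q, \<lambda>x. if h - int m < x \<and> x \<le> h then \<phi> (wt x) else wt x, h - int m, ot, g)" by simp
  have c: "wt (h - int m) \<in> P" using Suc.prems by simp
  have "reach orc (q, wt, h, ot, g) (Suc m) (step orc Mred (q, \<lambda>x. if h - int m < x \<and> x \<le> h then \<phi> (wt x) else wt x, h - int m, ot, g))"
    by (rule reach_snoc[OF R]) (simp add: cstate_def q)
  moreover have "step orc Mred (q, \<lambda>x. if h - int m < x \<and> x \<le> h then \<phi> (wt x) else wt x, h - int m, ot, g) = (q, \<lambda>x. if h - int (Suc m) < x \<and> x \<le> h then \<phi> (wt x) else wt x, h - int (Suc m), ot, g)"
    using q d c by (auto simp add: step_eq algebra_simps fun_eq_iff)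
  ultimately show ?case by simp
qed

lemma scan_copy:
  assumes P: "\<forall>j<m. wt (h + int j) = 2 \<and> ot (g + int j) \<in> {1, 2}"
  shows "reach orc (24, wt, h, ot, g) m
     (24, \<lambda>x. if h \<le> x \<and> x < h + int m then ot (g + (x - h)) else wt x, h + int m, ot, g + int m)"
  using P
proof (induction m)
  case 0 then show ?case by (simp add: reach_def fun_eq_iff)
next
  case (Suc m)
  then have R: "reach orc (24, wt, h, ot, g) m
     (24, \<lambda>x. if h \<le> x \<and> x < h + int m then ot (g + (x - h)) else wt x, h + int m, ot, g + int m)" by simp
  have c: "wt (h + int m) = 2 \<and> ot (g + int m) \<in> {1, 2}" using Suc.prems by simp
  have "reach orc (24, wt, h, ot, g) (Suc m) (step orc Mred (24, \<lambda>x. if h \<le> x \<and> x < h + int m then ot (g + (x - h)) else wt x, h + int m, ot, g + int m))"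
    by (rule reach_snoc[OF R]) (simp add: cstate_def)
  moreover have "step orc Mred (24, \<lambda>x. if h \<le> x \<and> x < h + int m then ot (g + (x - h)) else wt x, h + int m, ot, g + int m)
     = (24, \<lambda>x. if h \<le> x \<and> x < h + int (Suc m) then ot (g + (x - h)) else wt x, h + int (Suc m), ot, g + int (Suc m))"
    using c by (auto simp add: step_eq algebra_simps fun_eq_iff dl_def)
  ultimately show ?case by simp
qed


declare fun_upd_idem[simp]

lemma reach_eqI: "reach orc c t c' \<Longrightarrow> c' = c'' \<Longrightarrow> reach orc c t c''" by simp

lemma reach_tI: "reach orc c t c' \<Longrightarrow> t = t' \<Longrightarrow> reach orc c t' c'" by simp

lemma reach_trans': "reach orc c t1 c' \<Longrightarrow> reach orc c' t2 c'' \<Longrightarrow> t = t1 + t2 \<Longrightarrow> reach orc c t c''"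
  using reach_trans by blast

lemma scan_to_blank:
  assumes q: "q \<noteq> 23" "q \<noteq> 26" and d1: "\<And>s r. s \<noteq> 0 \<Longrightarrow> dl q s r = (q, s, -1, r, 0)"
    and d0: "\<And>r. dl q 0 r = (q', 0, 1, r, 0)" and b: "wt (-1) = 0" and h: "h \<ge> -1"
    and nz: "\<And>x. 0 \<le> x \<Longrightarrow> x \<le> h \<Longrightarrow> wt x \<noteq> 0"
  shows "reach orc (q, wt, h, ot, g) (nat (h + 1) + 1) (q', wt, 0, ot, g)"
proof -
  have "reach orc (q, wt, h, ot, g) (nat (h + 1)) (q, wt, h - int (nat (h + 1)), ot, g)"
    by (rule scan_l[where P = "{s. s \<noteq> 0}"]) (use q d1 nz h in auto)
  moreover have "h - int (nat (h + 1)) = -1" using h by simp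
  ultimately have a: "reach orc (q, wt, h, ot, g) (nat (h + 1)) (q, wt, -1, ot, g)" by simp
  have "reach orc (q, wt, -1, ot, g) 1 (q', wt, 0, ot, g)"
  proof (rule reach_one')
    show "dl q (wt (-1)) (ot g) = (q', 0, 1, ot g, 0)" using d0 b by simp
  qed (use q b in simp_all)
  from reach_trans[OF a this] show ?thesis by simp
qed

lemma funpow_split3: "(f ^^ (a + 1 + b)) c = (f ^^ b) (f ((f ^^ a) c))"
proof -
  have "a + 1 + b = b + Suc a" by simp
  then show ?thesis by (simp only: funpow_add comp_def funpow.simps(2))
qed

lemma un_app_inj: "un a @ xs = un b @ ys \<Longrightarrow> a = b \<and> xs = ys"
proof (induction a arbitrary: b)
  case 0 then show ?case by (cases b) (auto simp: un_def)
next
  case (Suc a) then show ?case by (cases b) (auto simp: un_def)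
qed

locale red =
  fixes n :: nat and k :: nat and E :: "(nat \<times> nat) set" and orc :: "bool list \<Rightarrow> bool list"
begin

abbreviation N where "N \<equiv> int n"
abbreviation K where "K \<equiv> int k"

definition msym :: "nat \<Rightarrow> nat" where "msym j = sym ((j div n, j mod n) \<in> E)"

definition Wg :: "nat \<Rightarrow> nat \<Rightarrow> (nat \<Rightarrow> nat) \<Rightarrow> nat \<Rightarrow> int \<Rightarrow> nat" where
  "Wg a b R c x = (if x < 0 then 0 else if x < N then R (nat x) else if x = N then a
     else if x \<le> N + K then 2 else if x = N + K + 1 then b else if x < N + K + 2 + int c then 5
     else if x < N + K + 2 + N * N then msym (nat (x - (N + K + 2))) else 0)"

definition closed :: "nat \<Rightarrow> nat \<Rightarrow> bool" where "closed i v \<longleftrightarrow> v = i \<or> (i, v) \<in> E"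

definition rul :: "nat \<Rightarrow> nat \<Rightarrow> nat \<Rightarrow> nat \<Rightarrow> nat" where
  "rul i f p v = (if v < f then (if v = i then (if v < p then 13 else 12)
      else if closed i v then (if v < p then 10 else 8) else (if v < p then 9 else 7))
     else (if v = i then 11 else 2))"

definition pB :: nat where "pB = n + n * n + k + 3"

definition Bsym :: "nat \<Rightarrow> nat" where "Bsym t = sym (closed (t div (n * n)) (t mod n))"

definition Q :: "nat \<Rightarrow> nat" where
  "Q j = (if j < n then 2 else if j = n then 1 else if j \<le> n + n * n then 2 else if j = n + n * n + 1 then 1
     else if j < n + n * n + k + 2 then 2 else if j = n + n * n + k + 2 then 1 else Bsym (j - pB))"

definition pref :: "nat \<Rightarrow> int \<Rightarrow> nat" where
  "pref w x = (if 0 \<le> x \<and> x < int w then Q (nat x) else 0)"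

lemma msym12: "msym j \<in> {1, 2}" by (simp add: msym_def sym_def)
lemma msym_nz[simp]: "msym j \<noteq> 0" by (simp add: msym_def sym_def)
lemma msym_pos[simp]: "0 < msym j" by (simp add: msym_def sym_def)

lemma Wg_neg[simp]: "x < 0 \<Longrightarrow> Wg a b R c x = 0" by (simp add: Wg_def)
lemma Wg_R[simp]: "v < n \<Longrightarrow> Wg a b R c (int v) = R v" by (simp add: Wg_def)
lemma Wg_R': "0 \<le> x \<Longrightarrow> x < N \<Longrightarrow> Wg a b R c x = R (nat x)" by (simp add: Wg_def)
lemma Wg_N[simp]: "Wg a b R c N = a" by (simp add: Wg_def)
lemma Wg_K: "N < x \<Longrightarrow> x \<le> N + K \<Longrightarrow> Wg a b R c x = 2" by (simp add: Wg_def)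
lemma Wg_b[simp]: "Wg a b R c (N + K + 1) = b" by (simp add: Wg_def)
lemma Wg_b'[simp]: "Wg a b R c (N + 1 + K) = b" by (simp add: Wg_def)
lemma Wg_cons: "N + K + 2 \<le> x \<Longrightarrow> x < N + K + 2 + int c \<Longrightarrow> Wg a b R c x = 5" by (simp add: Wg_def)
lemma Wg_mat: "N + K + 2 + int c \<le> x \<Longrightarrow> x < N + K + 2 + N * N \<Longrightarrow> Wg a b R c x = msym (nat (x - (N + K + 2)))"
  by (simp add: Wg_def)
lemma Wg_end: "c \<le> n * n \<Longrightarrow> N + K + 2 + N * N \<le> x \<Longrightarrow> Wg a b R c x = 0"
proof -
  assume "c \<le> n * n" "N + K + 2 + N * N \<le> x"
  moreover have "int c \<le> N * N" using \<open>c \<le> n * n\<close> by (metis of_nat_le_iff of_nat_mult)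
  ultimately show ?thesis by (simp add: Wg_def)
qed

lemma Wg_upd_R: "v < n \<Longrightarrow> (Wg a b R c)(int v := s) = Wg a b (R(v := s)) c"
  by (auto simp: fun_eq_iff Wg_def)
lemma Wg_upd_N: "(Wg a b R c)(N := s) = Wg s b R c"
  by (auto simp: fun_eq_iff Wg_def)
lemma Wg_upd_b: "(Wg a b R c)(N + K + 1 := s) = Wg a s R c"
  by (auto simp: fun_eq_iff Wg_def)
lemma Wg_upd_c: "c < n * n \<Longrightarrow> (Wg a b R c)(N + K + 2 + int c := 5) = Wg a b R (Suc c)"
  by (auto simp: fun_eq_iff Wg_def)
lemma Wg_cong: "(\<And>v. v < n \<Longrightarrow> R v = R' v) \<Longrightarrow> Wg a b R c = Wg a b R' c"
  by (auto simp: fun_eq_iff Wg_def)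

lemma Wg_nz: "a \<noteq> 0 \<Longrightarrow> b \<noteq> 0 \<Longrightarrow> (\<And>v. v < n \<Longrightarrow> R v \<noteq> 0) \<Longrightarrow> 0 \<le> x \<Longrightarrow> x < N + K + 2 + N * N \<Longrightarrow> Wg a b R c x \<noteq> 0"
  by (auto simp: Wg_def)

lemma pref_ext:
  assumes "\<And>j. j < m \<Longrightarrow> F (int w + int j) = Q (w + j)"
  shows "(\<lambda>x. if int w \<le> x \<and> x < int w + int m then F x else pref w x) = pref (w + m)"
proof (rule ext)
  fix x
  show "(if int w \<le> x \<and> x < int w + int m then F x else pref w x) = pref (w + m) x"
  proof (cases "int w \<le> x \<and> x < int w + int m")
    case True
    define j where "j = nat (x - int w)"
    have x: "x = int w + int j" "j < m" using True by (auto simp: j_def)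
    then show ?thesis using assms[of j] by (simp add: pref_def nat_add_distrib)
  next
    case False then show ?thesis by (auto simp: pref_def)
  qed
qed

lemma pref_upd: "Q w = s \<Longrightarrow> (pref w)(int w := s) = pref (Suc w)"
  by (auto simp: fun_eq_iff pref_def)

lemma pref_nonneg_blank: "pref w (int w) = 0" by (simp add: pref_def)

lemma Q_s1: "j < n \<Longrightarrow> Q j = 2" by (simp add: Q_def)
lemma Q_n: "Q n = 1" by (simp add: Q_def)
lemma Q_s2: "n < j \<Longrightarrow> j \<le> n + n * n \<Longrightarrow> Q j = 2" by (simp add: Q_def)
lemma Q_2: "Q (n + n * n + 1) = 1" by (simp add: Q_def)
lemma Q_s3: "n + n * n + 1 < j \<Longrightarrow> j < n + n * n + k + 2 \<Longrightarrow> Q j = 2" by (simp add: Q_def)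
lemma Q_3: "Q (n + n * n + k + 2) = 1" by (simp add: Q_def)
lemma Q_B: "Q (pB + t) = Bsym t" by (simp add: Q_def pB_def)

lemma rul000: "rul 0 0 0 v = (if v = 0 then 11 else 2)" by (simp add: rul_def)

lemma ph1: "reach orc (0, Wg 1 1 (\<lambda>_. 2) 0, 0, pref 0, 0) (n + 1) (2, Wg 4 1 (rul 0 0 0) 0, N + 1, pref (n + 1), N + 1)"
proof (cases "n = 0")
  case True
  have "reach orc (0, Wg 1 1 (\<lambda>_. 2) 0, 0, pref 0, 0) 1 (2, Wg 4 1 (rul 0 0 0) 0, N + 1, pref (n + 1), N + 1)"
  proof (rule reach_one')
    show "dl 0 (Wg 1 1 (\<lambda>_. 2) 0 0) (pref 0 0) = (2, 4, 1, 1, 1)" using True Wg_N[of 1 1 "\<lambda>_. 2" 0] by (simp add: dl_def)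
    show "Wg 4 1 (rul 0 0 0) 0 = (Wg 1 1 (\<lambda>_. 2) 0)(0 := 4)"
      using True Wg_upd_N[of 1 1 "\<lambda>_. 2" 0 4] Wg_cong[of "\<lambda>_. 2" "rul 0 0 0" 4 1 0] by simp
    have Q0: "Q 0 = 1" unfolding Q_def using True by simp
    show "pref (n + 1) = (pref 0)(0 := 1)" using True pref_upd[of 0 1, OF Q0] by simp
  qed (use True in simp_all)
  then show ?thesis using True by simp
next
  case False
  define W1 where "W1 = Wg 1 1 (rul 0 0 0) 0"
  have s1: "reach orc (0, Wg 1 1 (\<lambda>_. 2) 0, 0, pref 0, 0) 1 (1, W1, 1, pref 1, 1)"
  proof (rule reach_one')
    show "dl 0 (Wg 1 1 (\<lambda>_. 2) 0 0) (pref 0 0) = (1, 11, 1, 2, 1)" using False Wg_R[of 0] by (simp add: dl_def)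
    show "W1 = (Wg 1 1 (\<lambda>_. 2) 0)(0 := 11)" using False Wg_upd_R[of 0 1 1 "\<lambda>_. 2" 0 11]
      by (simp add: W1_def) (rule Wg_cong, simp add: rul000)
    show "pref 1 = (pref 0)(0 := 2)" using False pref_upd[of 0 2] by (simp add: Q_s1)
  qed simp_all
  have s2: "reach orc (1, W1, 1, pref 1, 1) (n - 1) (1, W1, N, pref n, N)"
  proof -
    have "reach orc (1, W1, 1, pref 1, 1) (n - 1) (1, W1, 1 + int (n - 1),
       \<lambda>x. if 1 \<le> x \<and> x < 1 + int (n - 1) then (\<lambda>_. 2) (W1 (1 + (x - 1))) else pref 1 x, 1 + int (n - 1))"
      by (rule scan_r_out[where P = "{2}"]) (auto simp: dl_def W1_def rul000 Wg_R')
    moreover have "(\<lambda>x. if 1 \<le> x \<and> x < 1 + int (n - 1) then (\<lambda>_. 2::nat) (W1 (1 + (x - 1))) else pref 1 x) = pref n"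
    proof -
      have "\<And>j. j < n - 1 \<Longrightarrow> Q (1 + j) = 2" by (rule Q_s1) simp
      then show ?thesis using pref_ext[of "n - 1" "\<lambda>_. 2" 1] False by simp
    qed
    moreover have "1 + int (n - 1) = N" using False by simp
    ultimately show ?thesis by simp
  qed
  have s3: "reach orc (1, W1, N, pref n, N) 1 (2, Wg 4 1 (rul 0 0 0) 0, N + 1, pref (n + 1), N + 1)"
  proof (rule reach_one')
    show "dl 1 (W1 N) (pref n N) = (2, 4, 1, 1, 1)" by (simp add: dl_def W1_def)
    show "Wg 4 1 (rul 0 0 0) 0 = W1(N := 4)" by (simp add: W1_def Wg_upd_N)
    show "pref (n + 1) = (pref n)(N := 1)" using pref_upd[of n 1] by (simp add: Q_n)
  qed simp_all
  show ?thesis using reach_trans'[OF reach_trans'[OF s1 s2 refl] s3] False by simp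
qed

lemma NN: "int (n * n) = N * N" by simp
lemma NNge: "0 \<le> N * N" by simp

lemma ph2: "reach orc (2, Wg 4 1 (rul 0 0 0) 0, N + 1, pref (n + 1), N + 1) (k + 1 + n * n + 1)
   (4, Wg 4 3 (rul 0 0 0) 0, N + K + 1 + N * N, pref (n + n * n + 2), int (n + n * n + 2))"
proof -
  define W1 where "W1 = Wg 4 3 (rul 0 0 0) 0"
  have a: "reach orc (2, Wg 4 1 (rul 0 0 0) 0, N + 1, pref (n + 1), N + 1) k (2, Wg 4 1 (rul 0 0 0) 0, N + 1 + K, pref (n + 1), N + 1)"
    by (rule scan_r[where P = "{2}"]) (auto simp: dl_def Wg_K)
  have b: "reach orc (2, Wg 4 1 (rul 0 0 0) 0, N + 1 + K, pref (n + 1), N + 1) 1 (3, W1, N + K + 2, pref (n + 1), N + 1)"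
  proof (rule reach_one')
    have "N + 1 + K = N + K + 1" by simp
    then show "dl 2 (Wg 4 1 (rul 0 0 0) 0 (N + 1 + K)) (pref (n + 1) (N + 1)) = (3, 3, 1, pref (n + 1) (N + 1), 0)"
      by (simp add: dl_def)
    show "W1 = (Wg 4 1 (rul 0 0 0) 0)(N + 1 + K := 3)" using Wg_upd_b[of 4 1 "rul 0 0 0" 0 3]
      by (simp add: W1_def add.commute add.left_commute)
  qed simp_all
  have c: "reach orc (3, W1, N + K + 2, pref (n + 1), N + 1) (n * n) (3, W1, N + K + 2 + N * N, pref (n + 1 + n * n), int (n + 1 + n * n))"
  proof -
    have "reach orc (3, W1, N + K + 2, pref (n + 1), N + 1) (n * n) (3, W1, N + K + 2 + int (n * n),
       \<lambda>x. if N + 1 \<le> x \<and> x < N + 1 + int (n * n) then (\<lambda>_. 2) (W1 (N + K + 2 + (x - (N + 1)))) else pref (n + 1) x, N + 1 + int (n * n))"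
    proof (rule scan_r_out[where P = "{1, 2}"])
      show "\<forall>j<n * n. W1 (N + K + 2 + int j) \<in> {1, 2}"
      proof (intro allI impI)
        fix j assume "j < n * n"
        then have "int j < N * N" by (metis NN of_nat_less_iff)
        then show "W1 (N + K + 2 + int j) \<in> {1, 2}" using msym12 by (simp add: W1_def Wg_mat)
      qed
    qed (auto simp: dl_def)
    moreover have "(\<lambda>x. if N + 1 \<le> x \<and> x < N + 1 + int (n * n) then (\<lambda>_. 2::nat) (W1 (N + K + 2 + (x - (N + 1)))) else pref (n + 1) x)
       = pref (n + 1 + n * n)"
    proof -
      have "\<And>j. j < n * n \<Longrightarrow> Q (n + 1 + j) = 2" by (rule Q_s2) auto
      then show ?thesis using pref_ext[of "n * n" "\<lambda>_. 2" "n + 1"] by (simp add: ac_simps)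
    qed
    ultimately show ?thesis by (simp add: NN ac_simps)
  qed
  have d: "reach orc (3, W1, N + K + 2 + N * N, pref (n + 1 + n * n), int (n + 1 + n * n)) 1
     (4, W1, N + K + 1 + N * N, pref (n + n * n + 2), int (n + n * n + 2))"
  proof (rule reach_one')
    have "W1 (N + K + 2 + N * N) = 0" by (simp add: W1_def Wg_end)
    then show "dl 3 (W1 (N + K + 2 + N * N)) (pref (n + 1 + n * n) (int (n + 1 + n * n))) = (4, 0, -1, 1, 1)"
      by (simp add: dl_def)
    show "W1 = W1(N + K + 2 + N * N := 0)" by (simp add: W1_def Wg_end)
    show "pref (n + n * n + 2) = (pref (n + 1 + n * n))(int (n + 1 + n * n) := 1)"
      using pref_upd[of "n + 1 + n * n" 1] Q_2 by (simp add: add.commute add.left_commute)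
  qed simp_all
  show ?thesis using reach_trans'[OF reach_trans'[OF reach_trans'[OF a b refl] c refl] d refl] by (simp add: W1_def)
qed

lemma ph3: "reach orc (4, Wg 4 3 (rul 0 0 0) 0, N + K + 1 + N * N, pref (n + n * n + 2), int (n + n * n + 2))
   (n * n + 1 + k + 1 + k + 1) (7, Wg 4 3 (rul 0 0 0) 0, N + K, pref pB, int pB)"
proof -
  define W1 where "W1 = Wg 4 3 (rul 0 0 0) 0"
  define w where "w = n + n * n + 2"
  have a: "reach orc (4, W1, N + K + 1 + N * N, pref w, int w) (n * n) (4, W1, N + K + 1, pref w, int w)"
  proof -
    have "reach orc (4, W1, N + K + 1 + N * N, pref w, int w) (n * n) (4, W1, N + K + 1 + N * N - int (n * n), pref w, int w)"
    proof (rule scan_l[where P = "{1, 2}"])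
      show "\<forall>j<n * n. W1 (N + K + 1 + N * N - int j) \<in> {1, 2}"
      proof (intro allI impI)
        fix j assume "j < n * n"
        then have "int j < N * N" by (metis NN of_nat_less_iff)
        then show "W1 (N + K + 1 + N * N - int j) \<in> {1, 2}" using msym12 by (simp add: W1_def Wg_mat)
      qed
    qed (auto simp: dl_def)
    then show ?thesis by simp
  qed
  have b: "reach orc (4, W1, N + K + 1, pref w, int w) 1 (5, W1, N + K, pref w, int w)"
  proof (rule reach_one')
    show "dl 4 (W1 (N + K + 1)) (pref w (int w)) = (5, 3, -1, pref w (int w), 0)" by (simp add: W1_def dl_def)
  qed (simp_all add: W1_def)
  have c: "reach orc (5, W1, N + K, pref w, int w) k (5, W1, N, pref w, int w)"
  proof -
    have "reach orc (5, W1, N + K, pref w, int w) k (5, W1, N + K - K, pref w, int w)"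
      by (rule scan_l[where P = "{2}"]) (auto simp: dl_def W1_def Wg_K)
    then show ?thesis by simp
  qed
  have d: "reach orc (5, W1, N, pref w, int w) 1 (6, W1, N + 1, pref w, int w)"
  proof (rule reach_one')
    show "dl 5 (W1 N) (pref w (int w)) = (6, 4, 1, pref w (int w), 0)" by (simp add: W1_def dl_def)
  qed (simp_all add: W1_def)
  have e: "reach orc (6, W1, N + 1, pref w, int w) k (6, W1, N + K + 1, pref (w + k), int (w + k))"
  proof -
    have "reach orc (6, W1, N + 1, pref w, int w) k (6, W1, N + 1 + K,
       \<lambda>x. if int w \<le> x \<and> x < int w + K then (\<lambda>_. 2) (W1 (N + 1 + (x - int w))) else pref w x, int w + K)"
      by (rule scan_r_out[where P = "{2}"]) (auto simp: dl_def W1_def Wg_K)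
    moreover have "(\<lambda>x. if int w \<le> x \<and> x < int w + K then (\<lambda>_. 2::nat) (W1 (N + 1 + (x - int w))) else pref w x) = pref (w + k)"
    proof -
      have "\<And>j. j < k \<Longrightarrow> Q (w + j) = 2" by (rule Q_s3) (auto simp: w_def)
      then show ?thesis using pref_ext[of k "\<lambda>_. 2" w] by simp
    qed
    ultimately show ?thesis by (simp add: add.commute add.left_commute)
  qed
  have f: "reach orc (6, W1, N + K + 1, pref (w + k), int (w + k)) 1 (7, W1, N + K, pref pB, int pB)"
  proof (rule reach_one')
    show "dl 6 (W1 (N + K + 1)) (pref (w + k) (int (w + k))) = (7, 3, -1, 1, 1)" by (simp add: W1_def dl_def)
    show "W1 = W1(N + K + 1 := 3)" by (simp add: W1_def)
    have pw: "pB = Suc (w + k)" by (simp add: pB_def w_def)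
    have q3: "Q (w + k) = 1" using Q_3 by (simp add: w_def ac_simps)
    show "pref pB = (pref (w + k))(int (w + k) := 1)"
      using pref_upd[of "w + k" 1, OF q3] pw by simp
    show "N + K = N + K + 1 + - 1" by simp
    show "int pB = int (w + k) + 1" by (simp add: w_def pB_def)
  qed simp_all
  show ?thesis using reach_trans'[OF reach_trans'[OF reach_trans'[OF reach_trans'[OF reach_trans'[OF a b refl] c refl] d refl] e refl] f refl]
    by (simp add: W1_def w_def)
qed

lemma rul_nz[simp]: "rul i f p v \<noteq> 0" by (simp add: rul_def)
lemma rul_pos[simp]: "0 < rul i f p v" by (simp add: rul_def)

lemma Wg_rul_nz: "0 \<le> x \<Longrightarrow> x < N + K + 2 + N * N \<Longrightarrow> Wg 4 3 (rul i f p) c x \<noteq> 0"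
  by (rule Wg_nz) simp_all

lemma divmod_in: "f < n \<Longrightarrow> (i * n + f) div n = i \<and> (i * n + f) mod n = f"
  by simp

lemma cell_lt: "i < n \<Longrightarrow> f < n \<Longrightarrow> i * n + f < n * n"
proof -
  assume "i < n" "f < n"
  then have "i * n + f < i * n + n" by simp
  also have "\<dots> = (i + 1) * n" by simp
  also have "\<dots> \<le> n * n" using \<open>i < n\<close> by (intro mult_le_mono1) simp
  finally show ?thesis .
qed

lemma fill_iter:
  assumes i: "i < n" and f: "f < n"
  shows "reach orc (8, Wg 4 3 (rul i f 0) (i * n + f), int f, ot, g) (2 * n + 2 * k + 2 * (i * n + f) + 7)
                   (8, Wg 4 3 (rul i (Suc f) 0) (Suc (i * n + f)), int f + 1, ot, g)"
proof -
  define c where "c = i * n + f"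
  define W where "W = Wg 4 3 (rul i f 0) c"
  define W' where "W' = Wg 4 3 (rul i f 0) (Suc c)"
  define qb :: nat where "qb = (if (i, f) \<in> E then 12 else 11)"
  have cl: "c < n * n" using cell_lt[OF i f] by (simp add: c_def)
  have cf: "int c < N * N" using cl by (metis NN of_nat_less_iff)
  have s1: "reach orc (8, W, int f, ot, g) 1 (9, W, int f + 1, ot, g)"
  proof (rule reach_one')
    show "dl 8 (W (int f)) (ot g) = (9, W (int f), 1, ot g, 0)" using f by (simp add: W_def dl_def rul_def)
  qed simp_all
  have s2: "reach orc (9, W, int f + 1, ot, g) (n + k - f) (9, W, N + K + 1, ot, g)"
  proof -
    have "reach orc (9, W, int f + 1, ot, g) (n + k - f) (9, W, int f + 1 + int (n + k - f), ot, g)"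
    proof (rule scan_r[where P = "{s. s \<noteq> 3}"])
      show "\<forall>j<n + k - f. W (int f + 1 + int j) \<in> {s. s \<noteq> 3}"
      proof (intro allI impI)
        fix j assume j: "j < n + k - f"
        show "W (int f + 1 + int j) \<in> {s. s \<noteq> 3}"
        proof (cases "f + 1 + j < n")
          case True
          have e: "int f + 1 + int j = int (f + 1 + j)" by simp
          have "W (int f + 1 + int j) = rul i f 0 (f + 1 + j)" by (simp only: W_def e Wg_R[OF True])
          then show ?thesis by (simp add: rul_def)
        next
          case False
          then show ?thesis using j by (auto simp: W_def Wg_def)
        qed
      qed
    qed (auto simp: dl_def)
    then show ?thesis by (rule reach_eqI) (use f in simp)
  qed
  have s3: "reach orc (9, W, N + K + 1, ot, g) 1 (10, W, N + K + 2, ot, g)"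
  proof (rule reach_one')
    show "dl 9 (W (N + K + 1)) (ot g) = (10, 3, 1, ot g, 0)" by (simp add: W_def dl_def)
  qed (simp_all add: W_def)
  have s4: "reach orc (10, W, N + K + 2, ot, g) c (10, W, N + K + 2 + int c, ot, g)"
    by (rule scan_r[where P = "{5}"]) (auto simp: dl_def W_def Wg_cons)
  have s5: "reach orc (10, W, N + K + 2 + int c, ot, g) 1 (qb, W', N + K + 1 + int c, ot, g)"
  proof (rule reach_one')
    have "W (N + K + 2 + int c) = msym c" using cf by (simp add: W_def Wg_mat)
    moreover have "msym c = sym ((i, f) \<in> E)" using f by (simp add: msym_def c_def)
    ultimately show "dl 10 (W (N + K + 2 + int c)) (ot g) = (qb, 5, -1, ot g, 0)"
      by (simp add: dl_def qb_def sym_def)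
    show "W' = W(N + K + 2 + int c := 5)" using Wg_upd_c[OF cl] by (simp add: W_def W'_def)
  qed simp_all
  have s6: "reach orc (qb, W', N + K + 1 + int c, ot, g) (nat (N + K + 1 + int c + 1) + 1) (qb + 2, W', 0, ot, g)"
  proof (rule scan_to_blank)
    fix x assume x: "0 \<le> x" "x \<le> N + K + 1 + int c"
    then have "x < N + K + 2 + N * N" using cf by simp
    then show "W' x \<noteq> 0" unfolding W'_def using x(1) by (rule Wg_rul_nz[rotated])
  qed (auto simp: qb_def dl_def W'_def)
  have s7: "reach orc (qb + 2, W', 0, ot, g) f (qb + 2, W', int f, ot, g)"
  proof -
    have "reach orc (qb + 2, W', 0, ot, g) f (qb + 2, W', 0 + int f, ot, g)"
    proof (rule scan_r[where P = "{7, 8, 12}"])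
      show "\<forall>j<f. W' (0 + int j) \<in> {7, 8, 12}" using f by (auto simp: W'_def rul_def)
    qed (auto simp: qb_def dl_def)
    then show ?thesis by simp
  qed
  have s8: "reach orc (qb + 2, W', int f, ot, g) 1 (8, Wg 4 3 (rul i (Suc f) 0) (Suc c), int f + 1, ot, g)"
  proof (rule reach_one')
    define sn :: nat where "sn = (if f = i then 12 else if (i, f) \<in> E then 8 else 7)"
    show "dl (qb + 2) (W' (int f)) (ot g) = (8, sn, 1, ot g, 0)"
      using f by (auto simp: W'_def qb_def dl_def rul_def sn_def)
    show "Wg 4 3 (rul i (Suc f) 0) (Suc c) = W'(int f := sn)"
      unfolding W'_def using Wg_upd_R[OF f]
      by simp (rule Wg_cong, auto simp: rul_def sn_def closed_def)
  qed (simp_all add: qb_def)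
  have nn: "nat (N + K + 1 + int c + 1) = n + k + c + 2" by simp
  have "reach orc (8, W, int f, ot, g) (1 + (n + k - f) + 1 + c + 1 + (nat (N + K + 1 + int c + 1) + 1) + f + 1)
                   (8, Wg 4 3 (rul i (Suc f) 0) (Suc c), int f + 1, ot, g)"
    using reach_trans'[OF reach_trans'[OF reach_trans'[OF reach_trans'[OF reach_trans'[OF reach_trans'[OF reach_trans'[OF s1 s2 refl] s3 refl] s4 refl] s5 refl] s6 refl] s7 refl] s8 refl] .
  then have "reach orc (8, W, int f, ot, g) (2 * n + 2 * k + 2 * c + 7) (8, Wg 4 3 (rul i (Suc f) 0) (Suc c), int f + 1, ot, g)"
    by (rule reach_tI) (use f nn in linarith)
  then show ?thesis by (simp add: W_def c_def)
qed

lemma fill_loop: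
  assumes i: "i < n" and f: "f \<le> n"
  shows "\<exists>t \<le> f * (2 * n + 2 * k + 2 * (n * n) + 7).
     reach orc (8, Wg 4 3 (rul i 0 0) (i * n), 0, ot, g) t (8, Wg 4 3 (rul i f 0) (i * n + f), int f, ot, g)"
  using f
proof (induction f)
  case 0 then show ?case by (intro exI[of _ 0]) simp
next
  case (Suc f)
  then obtain t where t: "t \<le> f * (2 * n + 2 * k + 2 * (n * n) + 7)"
    and R: "reach orc (8, Wg 4 3 (rul i 0 0) (i * n), 0, ot, g) t (8, Wg 4 3 (rul i f 0) (i * n + f), int f, ot, g)"
    by auto
  have fn: "f < n" using Suc.prems by simp
  have "i * n + f < n * n" using cell_lt[OF i fn] .
  then have b: "2 * n + 2 * k + 2 * (i * n + f) + 7 \<le> 2 * n + 2 * k + 2 * (n * n) + 7" by simp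
  have "reach orc (8, Wg 4 3 (rul i 0 0) (i * n), 0, ot, g) (t + (2 * n + 2 * k + 2 * (i * n + f) + 7))
     (8, Wg 4 3 (rul i (Suc f) 0) (i * n + Suc f), int (Suc f), ot, g)"
    by (rule reach_eqI[OF reach_trans[OF R fill_iter[OF i fn]]]) simp
  moreover have "t + (2 * n + 2 * k + 2 * (i * n + f) + 7) \<le> Suc f * (2 * n + 2 * k + 2 * (n * n) + 7)"
    using t b by simp
  ultimately show ?case by blast
qed

lemma osym_rul: "v < n \<Longrightarrow> osym (rul i n p v) = sym (closed i v)"
  by (simp add: rul_def osym_def sym_def closed_def)

lemma Q_row: assumes "i < n" "p < n" "v < n" shows "Q (pB + i * (n * n) + p * n + v) = sym (closed i v)"
proof -
  have pv: "p * n + v < n * n" using cell_lt[OF assms(2,3)] .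
  have "Q (pB + i * (n * n) + p * n + v) = Bsym (i * (n * n) + (p * n + v))"
    using Q_B[of "i * (n * n) + (p * n + v)"] by (simp add: ac_simps)
  also have "(i * (n * n) + (p * n + v)) div (n * n) = i"
  proof -
    have nz: "n * n \<noteq> 0" using assms(1) by simp
    have e: "(i * (n * n) + (p * n + v)) = (p * n + v) + (n * n) * i" by (simp add: algebra_simps)
    have "(i * (n * n) + (p * n + v)) div (n * n) = i + (p * n + v) div (n * n)"
      unfolding e by (rule div_mult_self2[OF nz])
    then show ?thesis using pv by simp
  qed
  moreover have "(i * (n * n) + (p * n + v)) mod n = v"
  proof -
    have e: "i * (n * n) + (p * n + v) = v + n * (i * n + p)" by (simp add: algebra_simps)
    show ?thesis unfolding e using assms(3) by simp
  qed
  ultimately show ?thesis by (simp add: Bsym_def)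
qed

lemma rep_pass:
  assumes i: "i < n" and p: "p < n"
  shows "reach orc (15, Wg 4 3 (rul i n p) c, N - 1, pref (pB + i * (n * n) + p * n), int (pB + i * (n * n) + p * n))
     (2 * n + 2)
     (15, Wg 4 3 (rul i n (Suc p)) c, N - 1, pref (pB + i * (n * n) + Suc p * n), int (pB + i * (n * n) + Suc p * n))"
proof -
  define w where "w = pB + i * (n * n) + p * n"
  define W where "W = Wg 4 3 (rul i n p) c"
  define W' where "W' = Wg 4 3 (rul i n (Suc p)) c"
  have n1: "n \<ge> 1" using p by simp
  have a: "reach orc (15, W, N - 1, pref w, int w) 1 (16, W, N - 2, pref w, int w)"
  proof (rule reach_one')
    have "W (N - 1) = rul i n p (n - 1)" using Wg_R[of "n - 1"] n1 by (simp add: W_def of_nat_diff)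
    moreover have "\<not> (n - 1 < p)" using p by simp
    ultimately show "dl 15 (W (N - 1)) (pref w (int w)) = (16, W (N - 1), -1, pref w (int w), 0)"
      using p n1 by (simp add: dl_def rul_def)
  qed simp_all
  have b: "reach orc (16, W, N - 2, pref w, int w) (nat (N - 2 + 1) + 1) (17, W, 0, pref w, int w)"
  proof (rule scan_to_blank)
    fix x assume x: "0 \<le> x" "x \<le> N - 2"
    then have "x < N + K + 2 + N * N" using NNge by linarith
    then show "W x \<noteq> 0" unfolding W_def using x(1) by (rule Wg_rul_nz[rotated])
  qed (use n1 in \<open>auto simp: dl_def W_def\<close>)
  have c: "reach orc (17, W, 0, pref w, int w) p (17, W, int p, pref (w + p), int (w + p))"
  proof -
    have "reach orc (17, W, 0, pref w, int w) p (17, W, 0 + int p,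
       \<lambda>x. if int w \<le> x \<and> x < int w + int p then osym (W (0 + (x - int w))) else pref w x, int w + int p)"
    proof (rule scan_r_out[where P = "{9, 10, 13}"])
      show "\<forall>j<p. W (0 + int j) \<in> {9, 10, 13}" using p by (auto simp: W_def rul_def)
    qed (auto simp: dl_def)
    moreover have "(\<lambda>x. if int w \<le> x \<and> x < int w + int p then osym (W (0 + (x - int w))) else pref w x) = pref (w + p)"
    proof (rule pref_ext)
      fix j assume j: "j < p"
      then have "osym (W (0 + (int w + int j - int w))) = sym (closed i j)" using p by (simp add: W_def osym_rul)
      also have "\<dots> = Q (w + j)" using Q_row[OF i p, of j] j p by (simp add: w_def)
      finally show "osym (W (0 + (int w + int j - int w))) = Q (w + j)" .
    qed
    ultimately show ?thesis by simp
  qed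
  have d: "reach orc (17, W, int p, pref (w + p), int (w + p)) 1 (18, W', int p + 1, pref (w + p + 1), int (w + p + 1))"
  proof (rule reach_one')
    define s where "s = rul i n p p"
    have sW: "W (int p) = s" using p by (simp add: W_def s_def)
    have s3: "s \<in> {7, 8, 12}" using p by (simp add: s_def rul_def)
    show "dl 17 (W (int p)) (pref (w + p) (int (w + p))) = (18, s + 2 - (if s = 12 then 1 else 0), 1, osym s, 1)"
      using sW s3 by (auto simp: dl_def)
    have Req: "rul i n (Suc p) = (rul i n p)(p := s + 2 - (if s = 12 then 1 else 0))"
      using p by (auto simp: fun_eq_iff rul_def s_def)
    show "W' = W(int p := s + 2 - (if s = 12 then 1 else 0))" unfolding W'_def W_def Wg_upd_R[OF p] Req ..
    have "osym s = Q (w + p)" using Q_row[OF i p p] osym_rul[OF p, of i p] by (simp add: s_def w_def)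
    then show "pref (w + p + 1) = (pref (w + p))(int (w + p) := osym s)" using pref_upd[of "w + p" "osym s"] by simp
  qed simp_all
  have e: "reach orc (18, W', int p + 1, pref (w + p + 1), int (w + p + 1)) (n - p - 1) (18, W', N, pref (w + n), int (w + n))"
  proof -
    have "reach orc (18, W', int p + 1, pref (w + p + 1), int (w + p + 1)) (n - p - 1) (18, W', int p + 1 + int (n - p - 1),
       \<lambda>x. if int (w + p + 1) \<le> x \<and> x < int (w + p + 1) + int (n - p - 1) then osym (W' (int p + 1 + (x - int (w + p + 1)))) else pref (w + p + 1) x,
       int (w + p + 1) + int (n - p - 1))"
    proof (rule scan_r_out[where P = "{7, 8, 9, 10, 12, 13}"])
      show "\<forall>j<n - p - 1. W' (int p + 1 + int j) \<in> {7, 8, 9, 10, 12, 13}"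
      proof (intro allI impI)
        fix j assume j: "j < n - p - 1"
        have e: "int p + 1 + int j = int (p + 1 + j)" by simp
        have jj: "p + 1 + j < n" using j by simp
        show "W' (int p + 1 + int j) \<in> {7, 8, 9, 10, 12, 13}" unfolding e W'_def Wg_R[OF jj] using jj by (simp add: rul_def)
      qed
    qed (auto simp: dl_def)
    moreover have "(\<lambda>x. if int (w + p + 1) \<le> x \<and> x < int (w + p + 1) + int (n - p - 1) then osym (W' (int p + 1 + (x - int (w + p + 1)))) else pref (w + p + 1) x)
       = pref (w + p + 1 + (n - p - 1))"
    proof (rule pref_ext)
      fix j assume j: "j < n - p - 1"
      have e: "int p + 1 + (int (w + p + 1) + int j - int (w + p + 1)) = int (p + 1 + j)" by simp
      have jj: "p + 1 + j < n" using j by simp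
      have "osym (W' (int p + 1 + (int (w + p + 1) + int j - int (w + p + 1)))) = sym (closed i (p + 1 + j))"
        unfolding e W'_def Wg_R[OF jj] osym_rul[OF jj] ..
      also have "\<dots> = Q (w + p + 1 + j)" using Q_row[OF i p jj] by (simp add: w_def ac_simps)
      finally show "osym (W' (int p + 1 + (int (w + p + 1) + int j - int (w + p + 1)))) = Q (w + p + 1 + j)" .
    qed
    moreover have "w + p + 1 + (n - p - 1) = w + n" using p by simp
    ultimately show ?thesis by (rule_tac reach_eqI) (use p in simp_all)
  qed
  have f: "reach orc (18, W', N, pref (w + n), int (w + n)) 1 (15, W', N - 1, pref (w + n), int (w + n))"
  proof (rule reach_one')
    show "dl 18 (W' N) (pref (w + n) (int (w + n))) = (15, 4, -1, pref (w + n) (int (w + n)), 0)"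
      by (simp add: W'_def dl_def)
  qed (simp_all add: W'_def)
  have "reach orc (15, W, N - 1, pref w, int w) (1 + (nat (N - 2 + 1) + 1) + p + 1 + (n - p - 1) + 1) (15, W', N - 1, pref (w + n), int (w + n))"
    using reach_trans'[OF reach_trans'[OF reach_trans'[OF reach_trans'[OF reach_trans'[OF a b refl] c refl] d refl] e refl] f refl] .
  then have "reach orc (15, W, N - 1, pref w, int w) (2 * n + 2) (15, W', N - 1, pref (w + n), int (w + n))"
    by (rule reach_tI) (use p in simp)
  then show ?thesis by (simp add: W_def W'_def w_def ac_simps)
qed

lemma rep_loop:
  assumes i: "i < n" and p: "p \<le> n"
  shows "reach orc (15, Wg 4 3 (rul i n 0) c, N - 1, pref (pB + i * (n * n)), int (pB + i * (n * n)))
     (p * (2 * n + 2))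
     (15, Wg 4 3 (rul i n p) c, N - 1, pref (pB + i * (n * n) + p * n), int (pB + i * (n * n) + p * n))"
  using p
proof (induction p)
  case 0 then show ?case by simp
next
  case (Suc p)
  then have R: "reach orc (15, Wg 4 3 (rul i n 0) c, N - 1, pref (pB + i * (n * n)), int (pB + i * (n * n)))
     (p * (2 * n + 2))
     (15, Wg 4 3 (rul i n p) c, N - 1, pref (pB + i * (n * n) + p * n), int (pB + i * (n * n) + p * n))" by simp
  have "p < n" using Suc.prems by simp
  from reach_trans[OF R rep_pass[OF i this, of c]] show ?case by (simp add: ac_simps)
qed

lemma Wg_map2: "a + m \<le> n \<Longrightarrow> (\<lambda>x. if int a \<le> x \<and> x < int a + int m then 2 else Wg A B R c x) =
   Wg A B (\<lambda>v. if a \<le> v \<and> v < a + m then 2 else R v) c"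
  by (auto simp: fun_eq_iff Wg_def nat_less_iff le_nat_iff)

lemma cleanup:
  assumes i: "i < n"
  shows "reach orc (15, Wg 4 3 (rul i n n) c, N - 1, ot, g) (3 * n + 3)
     (if Suc i < n then (8, Wg 4 3 (rul (Suc i) 0 0) c, 0, ot, g) else (23, Wg 4 3 (\<lambda>_. 2) c, 0, ot, g))"
proof -
  define W where "W = Wg 4 3 (rul i n n) c"
  define R1 where "R1 = (\<lambda>v. if 0 \<le> v \<and> v < 0 + i then 2 else rul i n n v)"
  have a: "reach orc (15, W, N - 1, ot, g) n (15, W, -1, ot, g)"
  proof -
    have "reach orc (15, W, N - 1, ot, g) n (15, W, N - 1 - int n, ot, g)"
    proof (rule scan_l[where P = "{9, 10, 13}"])
      show "\<forall>j<n. W (N - 1 - int j) \<in> {9, 10, 13}"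
      proof (intro allI impI)
        fix j assume j: "j < n"
        have e: "N - 1 - int j = int (n - 1 - j)" using j by simp
        have jj: "n - 1 - j < n" using j by simp
        show "W (N - 1 - int j) \<in> {9, 10, 13}" unfolding e W_def Wg_R[OF jj] using jj by (simp add: rul_def)
      qed
    qed (auto simp: dl_def)
    then show ?thesis by simp
  qed
  have b: "reach orc (15, W, -1, ot, g) 1 (19, W, 0, ot, g)"
  proof (rule reach_one')
    show "dl 15 (W (-1)) (ot g) = (19, 0, 1, ot g, 0)" by (simp add: W_def dl_def)
  qed (simp_all add: W_def)
  have c: "reach orc (19, W, 0, ot, g) i (19, Wg 4 3 R1 c, int i, ot, g)"
  proof -
    have "reach orc (19, W, 0, ot, g) i (19, \<lambda>x. if 0 \<le> x \<and> x < 0 + int i then (\<lambda>_. 2) (W x) else W x, 0 + int i, ot, g)"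
    proof (rule scan_r_map[where P = "{9, 10}"])
      show "\<forall>j<i. W (0 + int j) \<in> {9, 10}" using i by (auto simp: W_def rul_def)
    qed (auto simp: dl_def)
    moreover have "(\<lambda>x. if 0 \<le> x \<and> x < 0 + int i then (\<lambda>_. 2::nat) (W x) else W x) = Wg 4 3 R1 c"
      unfolding W_def R1_def using Wg_map2[of 0 i 4 3 "rul i n n" c] i by simp
    ultimately show ?thesis by simp
  qed
  define R2 where "R2 = R1(i := 2)"
  have d: "reach orc (19, Wg 4 3 R1 c, int i, ot, g) 1 (20, Wg 4 3 R2 c, int i + 1, ot, g)"
  proof (rule reach_one')
    show "dl 19 (Wg 4 3 R1 c (int i)) (ot g) = (20, 2, 1, ot g, 0)" using i by (simp add: R1_def rul_def dl_def)
    show "Wg 4 3 R2 c = (Wg 4 3 R1 c)(int i := 2)" using Wg_upd_R[OF i] by (simp add: R2_def)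
  qed simp_all
  show ?thesis
  proof (cases "Suc i < n")
    case True
    define R3 where "R3 = R2(Suc i := 11)"
    define R4 where "R4 = (\<lambda>v. if Suc (Suc i) \<le> v \<and> v < Suc (Suc i) + (n - Suc (Suc i)) then 2 else R3 v)"
    have e: "reach orc (20, Wg 4 3 R2 c, int i + 1, ot, g) 1 (21, Wg 4 3 R3 c, 2 + int i, ot, g)"
    proof (rule reach_one')
      have "Wg 4 3 R2 c (int i + 1) = Wg 4 3 R2 c (int (Suc i))" by (simp add: add.commute)
      also have "\<dots> = R2 (Suc i)" using Wg_R[OF True] .
      finally show "dl 20 (Wg 4 3 R2 c (int i + 1)) (ot g) = (21, 11, 1, ot g, 0)"
        using True by (simp add: R2_def R1_def rul_def dl_def)
      show "Wg 4 3 R3 c = (Wg 4 3 R2 c)(int i + 1 := 11)" using Wg_upd_R[OF True] by (simp add: R3_def add.commute)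
    qed simp_all
    have f: "reach orc (21, Wg 4 3 R3 c, 2 + int i, ot, g) (n - Suc (Suc i)) (21, Wg 4 3 R4 c, N, ot, g)"
    proof -
      have "reach orc (21, Wg 4 3 R3 c, int (Suc (Suc i)), ot, g) (n - Suc (Suc i))
        (21, \<lambda>x. if int (Suc (Suc i)) \<le> x \<and> x < int (Suc (Suc i)) + int (n - Suc (Suc i)) then (\<lambda>_. 2) (Wg 4 3 R3 c x) else Wg 4 3 R3 c x,
          int (Suc (Suc i)) + int (n - Suc (Suc i)), ot, g)"
      proof (rule scan_r_map[where P = "{9, 10}"])
        show "\<forall>j<n - Suc (Suc i). Wg 4 3 R3 c (int (Suc (Suc i)) + int j) \<in> {9, 10}"
        proof (intro allI impI)
          fix j assume j: "j < n - Suc (Suc i)"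
          have e: "int (Suc (Suc i)) + int j = int (Suc (Suc i) + j)" by simp
          have jj: "Suc (Suc i) + j < n" using j by simp
          show "Wg 4 3 R3 c (int (Suc (Suc i)) + int j) \<in> {9, 10}" unfolding e Wg_R[OF jj]
            using jj by (simp add: R3_def R2_def R1_def rul_def)
        qed
      qed (auto simp: dl_def)
      moreover have "(\<lambda>x. if int (Suc (Suc i)) \<le> x \<and> x < int (Suc (Suc i)) + int (n - Suc (Suc i)) then (\<lambda>_. 2::nat) (Wg 4 3 R3 c x) else Wg 4 3 R3 c x)
          = Wg 4 3 R4 c"
        using Wg_map2[of "Suc (Suc i)" "n - Suc (Suc i)" 4 3 R3 c] True by (simp add: R4_def)
      ultimately show ?thesis by (rule_tac reach_eqI) (use True in simp_all)
    qed
    have g: "reach orc (21, Wg 4 3 R4 c, N, ot, g) 1 (7, Wg 4 3 R4 c, N - 1, ot, g)"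
    proof (rule reach_one')
      show "dl 21 (Wg 4 3 R4 c N) (ot g) = (7, 4, -1, ot g, 0)" by (simp add: dl_def)
    qed simp_all
    have h: "reach orc (7, Wg 4 3 R4 c, N - 1, ot, g) (nat (N - 1 + 1) + 1) (8, Wg 4 3 R4 c, 0, ot, g)"
    proof (rule scan_to_blank)
      fix x assume x: "0 \<le> x" "x \<le> N - 1"
      then have xn: "nat x < n" by linarith
      then show "Wg 4 3 R4 c x \<noteq> 0" using x Wg_R'[of x 4 3 R4 c]
        by (simp add: R4_def R3_def R2_def R1_def)
    qed (use i in \<open>auto simp: dl_def\<close>)
    have R4eq: "Wg 4 3 R4 c = Wg 4 3 (rul (Suc i) 0 0) c"
      by (rule Wg_cong) (auto simp: R4_def R3_def R2_def R1_def rul_def)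
    have "reach orc (15, W, N - 1, ot, g) (n + 1 + i + 1 + 1 + (n - Suc (Suc i)) + 1 + (nat (N - 1 + 1) + 1)) (8, Wg 4 3 R4 c, 0, ot, g)"
      using reach_trans'[OF reach_trans'[OF reach_trans'[OF reach_trans'[OF reach_trans'[OF reach_trans'[OF reach_trans'[OF a b refl] c refl] d refl] e refl] f refl] g refl] h refl] .
    then have "reach orc (15, W, N - 1, ot, g) (3 * n + 3) (8, Wg 4 3 R4 c, 0, ot, g)"
      by (rule reach_tI) (use True in simp)
    then show ?thesis using True R4eq by (simp add: W_def)
  next
    case False
    then have ni: "n = Suc i" using i by simp
    have e: "reach orc (20, Wg 4 3 R2 c, int i + 1, ot, g) 1 (22, Wg 4 3 R2 c, N - 1, ot, g)"
    proof (rule reach_one')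
      have hN: "int i + 1 = N" using ni by simp
      then show "dl 20 (Wg 4 3 R2 c (int i + 1)) (ot g) = (22, 4, -1, ot g, 0)" by (simp add: dl_def)
      show "Wg 4 3 R2 c = (Wg 4 3 R2 c)(int i + 1 := 4)" by (simp only: hN) simp
      show "N - 1 = int i + 1 + - 1" using hN by simp
    qed simp_all
    have R2eq: "Wg 4 3 R2 c = Wg 4 3 (\<lambda>_. 2) c"
      by (rule Wg_cong) (use ni in \<open>auto simp: R2_def R1_def\<close>)
    have f: "reach orc (22, Wg 4 3 (\<lambda>_. 2) c, N - 1, ot, g) n (22, Wg 4 3 (\<lambda>_. 2) c, -1, ot, g)"
    proof -
      have "reach orc (22, Wg 4 3 (\<lambda>_. 2) c, N - 1, ot, g) n (22, Wg 4 3 (\<lambda>_. 2) c, N - 1 - int n, ot, g)"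
      proof (rule scan_l[where P = "{2}"])
        show "\<forall>j<n. Wg 4 3 (\<lambda>_. 2) c (N - 1 - int j) \<in> {2}"
        proof (intro allI impI)
          fix j assume j: "j < n"
          have e: "N - 1 - int j = int (n - 1 - j)" using j by simp
          have jj: "n - 1 - j < n" using j by simp
          show "Wg 4 3 (\<lambda>_. 2) c (N - 1 - int j) \<in> {2}" unfolding e Wg_R[OF jj] by simp
        qed
      qed (auto simp: dl_def)
      then show ?thesis by simp
    qed
    have g: "reach orc (22, Wg 4 3 (\<lambda>_. 2) c, -1, ot, g) 1 (23, Wg 4 3 (\<lambda>_. 2) c, 0, ot, g)"
    proof (rule reach_one')
      show "dl 22 (Wg 4 3 (\<lambda>_. 2) c (-1)) (ot g) = (23, 0, 1, ot g, 0)" by (simp add: dl_def)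
    qed simp_all
    have "reach orc (15, W, N - 1, ot, g) (n + 1 + i + 1 + 1 + n + 1) (23, Wg 4 3 (\<lambda>_. 2) c, 0, ot, g)"
      using reach_trans'[OF reach_trans'[OF reach_trans'[OF reach_trans'[OF reach_trans'[OF reach_trans'[OF a b refl] c refl] d[unfolded R2eq] refl] e[unfolded R2eq] refl] f refl] g refl] .
    then have "reach orc (15, W, N - 1, ot, g) (3 * n + 3) (23, Wg 4 3 (\<lambda>_. 2) c, 0, ot, g)"
      by (rule reach_tI) (use ni in simp)
    then show ?thesis using False by (simp add: W_def)
  qed
qed

definition BR :: nat where "BR = n * (2 * n + 2 * k + 2 * (n * n) + 7) + 1 + n * (2 * n + 2) + (3 * n + 3)"

definition rowst :: "nat \<Rightarrow> config" where
  "rowst i = (8, Wg 4 3 (rul i 0 0) (i * n), 0, pref (pB + i * (n * n)), int (pB + i * (n * n)))"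

definition qcfg :: config where
  "qcfg = (23, Wg 4 3 (\<lambda>_. 2) (n * n), 0, pref (pB + n * (n * n)), int (pB + n * (n * n)))"

lemma row:
  assumes i: "i < n"
  shows "\<exists>t \<le> BR. reach orc (rowst i) t (if Suc i < n then rowst (Suc i) else qcfg)"
proof -
  define w0 where "w0 = pB + i * (n * n)"
  obtain t1 where t1: "t1 \<le> n * (2 * n + 2 * k + 2 * (n * n) + 7)"
    and R1: "reach orc (8, Wg 4 3 (rul i 0 0) (i * n), 0, pref w0, int w0) t1 (8, Wg 4 3 (rul i n 0) (i * n + n), N, pref w0, int w0)"
    using fill_loop[OF i order.refl, of "pref w0" "int w0"] by auto
  have R2: "reach orc (8, Wg 4 3 (rul i n 0) (i * n + n), N, pref w0, int w0) 1 (15, Wg 4 3 (rul i n 0) (i * n + n), N - 1, pref w0, int w0)"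
  proof (rule reach_one')
    show "dl 8 (Wg 4 3 (rul i n 0) (i * n + n) N) (pref w0 (int w0)) = (15, 4, -1, pref w0 (int w0), 0)" by (simp add: dl_def)
  qed simp_all
  have R3: "reach orc (15, Wg 4 3 (rul i n 0) (i * n + n), N - 1, pref w0, int w0) (n * (2 * n + 2))
     (15, Wg 4 3 (rul i n n) (i * n + n), N - 1, pref (w0 + n * n), int (w0 + n * n))"
    using rep_loop[OF i order.refl, of "i * n + n"] by (simp add: w0_def)
  have R4: "reach orc (15, Wg 4 3 (rul i n n) (i * n + n), N - 1, pref (w0 + n * n), int (w0 + n * n)) (3 * n + 3)
     (if Suc i < n then (8, Wg 4 3 (rul (Suc i) 0 0) (i * n + n), 0, pref (w0 + n * n), int (w0 + n * n))
      else (23, Wg 4 3 (\<lambda>_. 2) (i * n + n), 0, pref (w0 + n * n), int (w0 + n * n)))"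
    by (rule cleanup[OF i])
  have R: "reach orc (rowst i) (t1 + 1 + n * (2 * n + 2) + (3 * n + 3))
     (if Suc i < n then (8, Wg 4 3 (rul (Suc i) 0 0) (i * n + n), 0, pref (w0 + n * n), int (w0 + n * n))
      else (23, Wg 4 3 (\<lambda>_. 2) (i * n + n), 0, pref (w0 + n * n), int (w0 + n * n)))"
    unfolding rowst_def w0_def[symmetric] using reach_trans'[OF reach_trans'[OF reach_trans'[OF R1 R2 refl] R3 refl] R4 refl] .
  have e1: "i * n + n = Suc i * n" by simp
  have e2: "w0 + n * n = pB + Suc i * (n * n)" by (simp add: w0_def)
  have "(if Suc i < n then (8, Wg 4 3 (rul (Suc i) 0 0) (i * n + n), 0, pref (w0 + n * n), int (w0 + n * n))
      else (23, Wg 4 3 (\<lambda>_. 2) (i * n + n), 0, pref (w0 + n * n), int (w0 + n * n))) = (if Suc i < n then rowst (Suc i) else qcfg)"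
  proof (cases "Suc i < n")
    case True then show ?thesis unfolding e1 e2 by (simp add: rowst_def)
  next
    case False
    then have si: "Suc i = n" using i by simp
    show ?thesis using False unfolding e1 e2 si by (simp add: qcfg_def)
  qed
  moreover have "t1 + 1 + n * (2 * n + 2) + (3 * n + 3) \<le> BR" using t1 by (simp add: BR_def)
  ultimately show ?thesis using R by auto
qed

lemma rows:
  assumes i: "i < n"
  shows "\<exists>t \<le> i * BR. reach orc (rowst 0) t (rowst i)"
  using i
proof (induction i)
  case 0 then show ?case by (intro exI[of _ 0]) simp
next
  case (Suc i)
  then obtain t where t: "t \<le> i * BR" and R: "reach orc (rowst 0) t (rowst i)" by auto
  obtain t' where t': "t' \<le> BR" and R': "reach orc (rowst i) t' (rowst (Suc i))"
    using row[of i] Suc.prems by auto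
  show ?case using reach_trans[OF R R'] t t' by (intro exI[of _ "t + t'"]) simp
qed

lemma all_rows:
  assumes n: "0 < n"
  shows "\<exists>t \<le> n * BR. reach orc (rowst 0) t qcfg"
proof -
  obtain t where t: "t \<le> (n - 1) * BR" and R: "reach orc (rowst 0) t (rowst (n - 1))"
    using rows[of "n - 1"] n by auto
  obtain t' where t': "t' \<le> BR" and R': "reach orc (rowst (n - 1)) t' qcfg"
    using row[of "n - 1"] n by auto
  have "t + t' \<le> n * BR"
  proof -
    have "t + t' \<le> (n - 1) * BR + BR" using t t' by simp
    also have "\<dots> = n * BR" using n by (cases n) auto
    finally show ?thesis .
  qed
  then show ?thesis using reach_trans[OF R R'] by blast
qed

lemma zero_rows:
  assumes n0: "n = 0"
  shows "reach orc (rowst 0) 4 qcfg"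
proof -
  have z: "(0::int) = N" using n0 by simp
  define W where "W = Wg 4 3 (\<lambda>_. 2) 0"
  define Ot where "Ot = pref pB"
  define gg where "gg = int pB"
  have W0: "W 0 = 4" unfolding W_def by (subst z) (rule Wg_N)
  have Wm: "W (-1) = 0" by (simp add: W_def)
  have rs: "rowst 0 = (8, W, 0, Ot, gg)"
  proof -
    have "Wg 4 3 (rul 0 0 0) 0 = Wg 4 3 (\<lambda>_. 2) 0" by (rule Wg_cong) (simp add: n0)
    then show ?thesis unfolding rowst_def W_def Ot_def gg_def by simp
  qed
  have qc: "qcfg = (23, W, 0, Ot, gg)"
    unfolding qcfg_def W_def Ot_def gg_def using n0 by simp
  have a: "reach orc (8, W, 0, Ot, gg) 1 (15, W, -1, Ot, gg)"
  proof (rule reach_one')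
    show "dl 8 (W (0)) (Ot gg) = (15, 4, -1, Ot gg, 0)" by (simp add: W0 dl_def)
  qed (simp_all add: W0)
  have b: "reach orc (15, W, -1, Ot, gg) 1 (19, W, 0, Ot, gg)"
  proof (rule reach_one')
    show "dl 15 (W (-1)) (Ot gg) = (19, 0, 1, Ot gg, 0)" by (simp add: Wm dl_def)
  qed (simp_all add: Wm)
  have c: "reach orc (19, W, 0, Ot, gg) 1 (22, W, -1, Ot, gg)"
  proof (rule reach_one')
    show "dl 19 (W (0)) (Ot gg) = (22, 4, -1, Ot gg, 0)" by (simp add: W0 dl_def)
  qed (simp_all add: W0)
  have d: "reach orc (22, W, -1, Ot, gg) 1 (23, W, 0, Ot, gg)"
  proof (rule reach_one')
    show "dl 22 (W (-1)) (Ot gg) = (23, 0, 1, Ot gg, 0)" by (simp add: Wm dl_def)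
  qed (simp_all add: Wm)
  show ?thesis unfolding rs qc using reach_trans'[OF reach_trans'[OF reach_trans'[OF a b refl] c refl] d refl] by (simp add: numeral_eq_Suc)
qed

lemma un_nth: "(un a @ xs) ! j = (if j < a then True else if j = a then False else xs ! (j - Suc a))"
  by (simp add: un_def nth_append)

lemma len_un[simp]: "length (un a) = Suc a" by (simp add: un_def)

definition inw :: "bool list" where
  "inw = un n @ un k @ map (\<lambda>p. p \<in> E) (List.product [0..<n] [0..<n])"

lemma inw_len: "length inw = n + k + 2 + n * n" by (simp add: inw_def)

lemma tape_inw: "tape_of inw = Wg 1 1 (\<lambda>_. 2) 0"
proof (rule ext)
  fix x
  show "tape_of inw x = Wg 1 1 (\<lambda>_. 2) 0 x"
  proof (cases "x < 0")
    case True then show ?thesis by (simp add: tape_of_nth)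
  next
    case False
    define j where "j = nat x"
    have xj: "x = int j" using False by (simp add: j_def)
    have L: "length inw = n + k + 2 + n * n" by (rule inw_len)
    show ?thesis
    proof (cases "j < n + k + 2 + n * n")
      case False
      then have "N + K + 2 + N * N \<le> x" using xj by (metis NN of_nat_add of_nat_le_iff not_less of_nat_numeral)
      then show ?thesis using False xj L by (simp add: tape_of_nth Wg_end)
    next
      case True
      have t: "tape_of inw x = sym (inw ! j)" using True xj L by (simp add: tape_of_nth)
      have "inw ! j = (if j < n then True else if j = n then False else if j \<le> n + k then True
           else if j = n + k + 1 then False else
           (((j - (n + k + 2)) div n, (j - (n + k + 2)) mod n) \<in> E))"
      proof -
        have a: "inw ! j = (if j < n then True else if j = n then False else
                    (un k @ map (\<lambda>p. p \<in> E) (List.product [0..<n] [0..<n])) ! (j - Suc n))"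
          unfolding inw_def un_nth ..
        have b: "\<And>j'. (un k @ map (\<lambda>p. p \<in> E) (List.product [0..<n] [0..<n])) ! j' =
             (if j' < k then True else if j' = k then False else
              map (\<lambda>p. p \<in> E) (List.product [0..<n] [0..<n]) ! (j' - Suc k))"
          unfolding un_nth ..
        show ?thesis
        proof (cases "j \<le> n + k + 1")
          case True then show ?thesis unfolding a b by auto
        next
          case False
          define t where "t = j - (n + k + 2)"
          have tl: "t < n * n" using \<open>j < n + k + 2 + n * n\<close> False by (simp add: t_def)
          have e: "j - Suc n - Suc k = t" using False by (simp add: t_def)
          have "map (\<lambda>p. p \<in> E) (List.product [0..<n] [0..<n]) ! t = ((t div n, t mod n) \<in> E)"
            using tl product_nth[of t "[0..<n]" "[0..<n]"]
            by (simp add: less_mult_imp_div_less) (metis less_mult_imp_div_less nth_upt add_0 mod_less_divisor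
                 gr_implies_not0 mult_0_right not_gr0 less_nat_zero_code)
          moreover have f1: "\<not> j < n" "j \<noteq> n" "\<not> j - Suc n < k" "j - Suc n \<noteq> k" "\<not> j \<le> n + k" "j \<noteq> n + k + 1"
            using False by auto
          ultimately show ?thesis unfolding a b using e by (simp add: t_def)
        qed
      qed
      moreover have "Wg 1 1 (\<lambda>_. 2) 0 x = (if j < n then 2 else if j = n then 1 else if j \<le> n + k then 2
           else if j = n + k + 1 then 1 else msym (j - (n + k + 2)))"
      proof -
        consider "j < n" | "j = n" | "n < j \<and> j \<le> n + k" | "j = n + k + 1" | "n + k + 1 < j" by linarith
        then show ?thesis
        proof cases
          case 1 then show ?thesis unfolding xj by simp
        next
          case 2 then show ?thesis unfolding xj by simp
        next
          case 3 then show ?thesis unfolding xj by (simp add: Wg_K)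
        next
          case 4
          then have "x = N + K + 1" unfolding xj by simp
          then show ?thesis using 4 by simp
        next
          case 5
          have a: "N + K + 2 + int 0 \<le> x" using 5 unfolding xj by simp
          have b: "x < N + K + 2 + N * N" using True unfolding xj NN[symmetric] by linarith
          have c: "nat (x - (N + K + 2)) = j - (n + k + 2)" unfolding xj using 5 by simp
          show ?thesis using Wg_mat[OF a b] 5 c by simp
        qed
      qed
      ultimately show ?thesis unfolding t by (auto simp: sym_def msym_def)
    qed
  qed
qed

definition qw :: "bool list" where
  "qw = un n @ un (n * n) @ un k @ map (\<lambda>p. p \<in> Ecl n E) (List.product [0..<n] [0..<n * n])"

lemma qw_len: "length qw = pB + n * (n * n)" by (simp add: qw_def pB_def)

lemma Q_qw: assumes j: "j < length qw" shows "Q j = sym (qw ! j)"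
proof -
  have a: "qw ! j = (if j < n then True else if j = n then False else
              (un (n * n) @ un k @ map (\<lambda>p. p \<in> Ecl n E) (List.product [0..<n] [0..<n * n])) ! (j - Suc n))"
    unfolding qw_def un_nth ..
  have b: "\<And>j'. (un (n * n) @ un k @ map (\<lambda>p. p \<in> Ecl n E) (List.product [0..<n] [0..<n * n])) ! j' =
      (if j' < n * n then True else if j' = n * n then False else
         (un k @ map (\<lambda>p. p \<in> Ecl n E) (List.product [0..<n] [0..<n * n])) ! (j' - Suc (n * n)))"
    unfolding un_nth ..
  have c: "\<And>j'. (un k @ map (\<lambda>p. p \<in> Ecl n E) (List.product [0..<n] [0..<n * n])) ! j' =
      (if j' < k then True else if j' = k then False else
         map (\<lambda>p. p \<in> Ecl n E) (List.product [0..<n] [0..<n * n]) ! (j' - Suc k))"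
    unfolding un_nth ..
  consider "j < n" | "j = n" | "n < j \<and> j \<le> n + n * n" | "j = n + n * n + 1"
    | "n + n * n + 1 < j \<and> j < n + n * n + k + 2" | "j = n + n * n + k + 2" | "pB \<le> j"
    unfolding pB_def by linarith
  then show ?thesis
  proof cases
    case 1 then show ?thesis using a by (simp add: Q_def sym_def)
  next
    case 2 then show ?thesis using a by (simp add: Q_def sym_def)
  next
    case 3
    then have "j - Suc n < n * n" by linarith
    then show ?thesis using 3 using a b by (simp add: Q_def sym_def)
  next
    case 4
    then have "j - Suc n = n * n" by linarith
    then show ?thesis using 4 using a b by (simp add: Q_def sym_def)
  next
    case 5
    then have "\<not> j - Suc n < n * n" "j - Suc n \<noteq> n * n" "j - Suc n - Suc (n * n) < k" by linarith+
    then show ?thesis using 5 using a b c by (simp add: Q_def sym_def)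
  next
    case 6
    then have "\<not> j - Suc n < n * n" "j - Suc n \<noteq> n * n" "j - Suc n - Suc (n * n) = k" by linarith+
    then show ?thesis using 6 using a b c by (simp add: Q_def sym_def)
  next
    case 7
    define t where "t = j - pB"
    have jt: "j = pB + t" using 7 by (simp add: t_def)
    have tl: "t < n * (n * n)" using j 7 by (simp add: qw_len t_def)
    then have np: "0 < n" by (cases n) auto
    have f: "\<not> j - Suc n < n * n" "j - Suc n \<noteq> n * n" "\<not> j - Suc n - Suc (n * n) < k"
      "j - Suc n - Suc (n * n) \<noteq> k" "\<not> j < n" "j \<noteq> n" "j - Suc n - Suc (n * n) - Suc k = t"
      using 7 by (simp_all add: t_def pB_def)
    have dl: "t div (n * n) < n" using tl by (simp add: less_mult_imp_div_less mult.commute)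
    have ml: "t mod (n * n) < n * n" using np by simp
    have mm: "t mod (n * n) mod n = t mod n" by (simp add: mod_mod_cancel)
    have "map (\<lambda>p. p \<in> Ecl n E) (List.product [0..<n] [0..<n * n]) ! t = ((t div (n * n), t mod (n * n)) \<in> Ecl n E)"
      using tl product_nth[of t "[0..<n]" "[0..<n * n]"] dl ml by simp
    also have "\<dots> = closed (t div (n * n)) (t mod n)" using dl ml mm by (auto simp: Ecl_def closed_def)
    finally have "qw ! j = closed (t div (n * n)) (t mod n)" unfolding a b c using f by simp
    moreover have "Q j = Bsym t" unfolding jt by (rule Q_B)
    ultimately show ?thesis by (simp add: Bsym_def)
  qed
qed

lemma read_qcfg: "read_tape (pref (pB + n * (n * n))) = qw"
proof (rule read_tape_eq)
  fix j assume j: "j < length qw"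
  then have "int j < int (pB + n * (n * n))" unfolding qw_len by (simp only: of_nat_less_iff)
  then show "pref (pB + n * (n * n)) (int j) = sym (qw ! j)" using Q_qw[OF j] by (simp add: pref_def)
next
  show "pref (pB + n * (n * n)) (int (length qw)) \<notin> {1, 2}" by (simp add: pref_def qw_len)
qed

lemma qw_enc: "qw = enc LeftBIS (n, n * n, Ecl n E, k)" by (simp add: qw_def LeftBIS_def)

lemma qw_inst: "(n, n * n, Ecl n E, k) \<in> inst LeftBIS" using Ecl_sub by (simp add: LeftBIS_def)

lemma post:
  "\<exists>t \<le> 2 * n + 2. \<exists>Wf h ot g. reach orc (24, Wg 4 3 (\<lambda>_. 2) (n * n), 0, tape_of A, 0) t (26, Wf, h, ot, g)
      \<and> read_tape Wf = strip (take n A)"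
proof -
  define m where "m = min n (length A)"
  define W0 where "W0 = Wg 4 3 (\<lambda>_. 2) (n * n)"
  define T where "T = tape_of A"
  define W1 where "W1 = (\<lambda>x. if 0 \<le> x \<and> x < 0 + int m then T (0 + (x - 0)) else W0 x)"
  define sl where "sl = strip (take n A)"
  define z where "z = length sl"
  have tl: "length (take n A) = m" by (simp add: m_def)
  have dec: "take n A = sl @ replicate (m - z) False" using strip_decomp[of "take n A"] tl by (simp add: sl_def z_def)
  have zm: "z \<le> m" using strip_len[of "take n A"] unfolding tl by (simp add: sl_def z_def)
  have TA: "\<And>j. j < length A \<Longrightarrow> T (int j) = sym (A ! j)" by (simp add: T_def tape_of_nth)
  have a: "reach orc (24, W0, 0, T, 0) m (24, W1, int m, T, int m)"
  proof -
    have "reach orc (24, W0, 0, T, 0) m (24, W1, 0 + int m, T, 0 + int m)"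
      unfolding W1_def
    proof (rule scan_copy)
      show "\<forall>j<m. W0 (0 + int j) = 2 \<and> T (0 + int j) \<in> {1, 2}"
        using TA by (auto simp: m_def W0_def sym_def)
    qed
    then show ?thesis by simp
  qed
  define W2 where "W2 = W1(int m := 0)"
  have b: "reach orc (24, W1, int m, T, int m) 1 (25, W2, int m - 1, T, int m)"
  proof (rule reach_one')
    have "\<not> (W1 (int m) = 2 \<and> T (int m) \<in> {1, 2})"
    proof (cases "m = n")
      case True then show ?thesis by (simp add: W1_def W0_def)
    next
      case False then have "m = length A" by (simp add: m_def)
      then show ?thesis by (simp add: T_def tape_of_nth)
    qed
    then show "dl 24 (W1 (int m)) (T (int m)) = (25, 0, -1, T (int m), 0)" by (simp add: dl_def)
  qed (simp_all add: W2_def)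
  define W3 where "W3 = (\<lambda>x. if int m - 1 - int (m - z) < x \<and> x \<le> int m - 1 then (\<lambda>_. 0) (W2 x) else W2 x)"
  have c: "reach orc (25, W2, int m - 1, T, int m) (m - z) (25, W3, int z - 1, T, int m)"
  proof -
    have "reach orc (25, W2, int m - 1, T, int m) (m - z) (25, W3, int m - 1 - int (m - z), T, int m)"
      unfolding W3_def
    proof (rule scan_l_map[where P = "{1}"])
      show "\<forall>j<m - z. W2 (int m - 1 - int j) \<in> {1}"
      proof (intro allI impI)
        fix j assume j: "j < m - z"
        define p where "p = m - 1 - j"
        have pe: "int m - 1 - int j = int p" using j by (simp add: p_def)
        have pz: "z \<le> p" "p < m" using j by (auto simp: p_def)
        have "take n A ! p = False" using pz by (simp add: dec nth_append z_def)
        then have "A ! p = False" using pz tl by simp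
        moreover have "p < length A" using pz by (simp add: m_def)
        ultimately show "W2 (int m - 1 - int j) \<in> {1}" unfolding pe using pz TA
          by (simp add: W2_def W1_def sym_def)
      qed
    qed (auto simp: dl_def)
    then show ?thesis using zm by (rule_tac reach_eqI) simp_all
  qed
  have d: "reach orc (25, W3, int z - 1, T, int m) 1 (26, W3, int z - 1, T, int m)"
  proof (rule reach_one')
    have "W3 (int z - 1) \<noteq> 1"
    proof (cases "z = 0")
      case True then show ?thesis by (simp add: W3_def W2_def W1_def W0_def)
    next
      case False
      have l: "last sl = True" using strip_last[of "take n A"] False by (simp add: sl_def z_def)
      have "sl ! (z - 1) = True" using l False by (simp add: z_def last_conv_nth)
      then have "take n A ! (z - 1) = True" using False by (simp add: dec nth_append z_def)
      moreover have "z - 1 < m" using False zm by simp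
      ultimately have "A ! (z - 1) = True" "z - 1 < length A" using tl by (auto simp: m_def)
      moreover have "int z - 1 = int (z - 1)" using False by simp
      ultimately show ?thesis using False zm TA[of "z - 1"] by (simp add: W3_def W2_def W1_def sym_def)
    qed
    then show "dl 25 (W3 (int z - 1)) (T (int m)) = (26, W3 (int z - 1), 0, T (int m), 0)" by (simp add: dl_def)
  qed simp_all
  have rd: "read_tape W3 = sl"
  proof (rule read_tape_eq)
    fix j assume j: "j < length sl"
    then have jm: "j < m" "j < length A" using zm by (auto simp: z_def m_def)
    have "sl ! j = A ! j" using j jm by (simp add: sl_def strip_nth m_def)
    moreover have "int m - 1 - int (m - length sl) = int (length sl) - 1" using zm by (simp add: z_def)
    ultimately show "W3 (int j) = sym (sl ! j)" using j jm TA by (simp add: W3_def W2_def W1_def z_def)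
  next
    show "W3 (int (length sl)) \<notin> {1, 2}"
      by (cases "z = m") (use zm in \<open>auto simp: W3_def W2_def z_def[symmetric]\<close>)
  qed
  have "reach orc (24, W0, 0, T, 0) (m + 1 + (m - z) + 1) (26, W3, int z - 1, T, int m)"
    using reach_trans'[OF reach_trans'[OF reach_trans'[OF a b refl] c refl] d refl] .
  moreover have "m + 1 + (m - z) + 1 \<le> 2 * n + 2" using zm by (simp add: m_def)
  ultimately show ?thesis using rd unfolding W0_def T_def sl_def by blast
qed

lemma to_rows: "\<exists>t \<le> (n + 1) + (k + 1 + n * n + 1) + (n * n + 1 + k + 1 + k + 1) + (n + k + 2).
   reach orc (0, Wg 1 1 (\<lambda>_. 2) 0, 0, pref 0, 0) t (rowst 0)"
proof -
  have bk: "reach orc (7, Wg 4 3 (rul 0 0 0) 0, N + K, pref pB, int pB) (nat (N + K + 1) + 1) (8, Wg 4 3 (rul 0 0 0) 0, 0, pref pB, int pB)"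
  proof (rule scan_to_blank)
    fix x assume x: "0 \<le> x" "x \<le> N + K"
    then have "x < N + K + 2 + N * N" using NNge by linarith
    then show "Wg 4 3 (rul 0 0 0) 0 x \<noteq> 0" using x(1) by (rule Wg_rul_nz[rotated])
  qed (auto simp: dl_def)
  have "nat (N + K + 1) + 1 = n + k + 2" by simp
  moreover have "rowst 0 = (8, Wg 4 3 (rul 0 0 0) 0, 0, pref pB, int pB)" by (simp add: rowst_def)
  ultimately show ?thesis using reach_trans'[OF reach_trans'[OF reach_trans'[OF ph1 ph2 refl] ph3 refl] bk refl]
    by auto
qed

lemma to_qcfg: "\<exists>t \<le> (n + 1) + (k + 1 + n * n + 1) + (n * n + 1 + k + 1 + k + 1) + (n + k + 2) + (n * BR + 4).
   reach orc (0, Wg 1 1 (\<lambda>_. 2) 0, 0, pref 0, 0) t qcfg"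
proof -
  obtain t1 where t1: "t1 \<le> (n + 1) + (k + 1 + n * n + 1) + (n * n + 1 + k + 1 + k + 1) + (n + k + 2)"
    and R1: "reach orc (0, Wg 1 1 (\<lambda>_. 2) 0, 0, pref 0, 0) t1 (rowst 0)" using to_rows by auto
  obtain t2 where t2: "t2 \<le> n * BR + 4" and R2: "reach orc (rowst 0) t2 qcfg"
  proof (cases "n = 0")
    case True then show ?thesis using zero_rows that by auto
  next
    case False
    then obtain t where "t \<le> n * BR" "reach orc (rowst 0) t qcfg" using all_rows by auto
    then show ?thesis using that[of t] by simp
  qed
  show ?thesis using reach_trans[OF R1 R2] t1 t2 by (intro exI[of _ "t1 + t2"]) simp
qed

definition cnt :: nat where "cnt = sol LeftBIS (n, n * n, Ecl n E, k)"

lemma main: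
  assumes orc: "is_oracle LeftBIS orc"
  shows "\<exists>t \<le> (n + 1) + (k + 1 + n * n + 1) + (n * n + 1 + k + 1 + k + 1) + (n + k + 2) + (n * BR + 4) + 1 + (2 * n + 2).
    cstate (run orc Mred inw t) = 26 \<and> read_tape (cwork (run orc Mred inw t)) = strip (take n (bin cnt)) \<and>
    (\<forall>i<t. cstate (run orc Mred inw i) = 23 \<longrightarrow> read_tape (coracle (run orc Mred inw i)) = qw)"
proof -
  have init: "init_config Mred inw = (0, Wg 1 1 (\<lambda>_. 2) 0, 0, pref 0, 0)"
    by (simp add: init_config_def tape_inw fun_eq_iff pref_def)
  obtain t0 where t0: "t0 \<le> (n + 1) + (k + 1 + n * n + 1) + (n * n + 1 + k + 1 + k + 1) + (n + k + 2) + (n * BR + 4)"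
    and R0: "reach orc (init_config Mred inw) t0 qcfg" using to_qcfg unfolding init by auto
  define q1 where "q1 = (24::nat, Wg 4 3 (\<lambda>_. 2) (n * n), 0::int, tape_of (bin cnt), 0::int)"
  have sq: "step orc Mred qcfg = q1"
  proof -
    have "orc qw = bin cnt" using orc qw_inst unfolding is_oracle_def qw_enc cnt_def by blast
    then show ?thesis by (simp add: step_def qcfg_def q1_def read_qcfg)
  qed
  obtain t2 Wf h ot g where t2: "t2 \<le> 2 * n + 2" and R2: "reach orc q1 t2 (26, Wf, h, ot, g)"
    and rd: "read_tape Wf = strip (take n (bin cnt))"
    using post[of "bin cnt"] unfolding q1_def by blast
  define T where "T = t0 + 1 + t2"
  have runT: "run orc Mred inw T = (26, Wf, h, ot, g)"
    using R0 R2 sq unfolding run_def T_def funpow_split3 reach_def by simp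
  have qs: "\<forall>i<T. cstate (run orc Mred inw i) = 23 \<longrightarrow> read_tape (coracle (run orc Mred inw i)) = qw"
  proof (intro allI impI)
    fix i assume i: "i < T" and st: "cstate (run orc Mred inw i) = 23"
    consider "i < t0" | "i = t0" | "t0 < i" by linarith
    then show "read_tape (coracle (run orc Mred inw i)) = qw"
    proof cases
      case 1 then show ?thesis using R0 st unfolding reach_def run_def by auto
    next
      case 2 then show ?thesis using R0 unfolding reach_def run_def
        by (simp add: coracle_def qcfg_def read_qcfg)
    next
      case 3
      define j where "j = i - t0 - 1"
      have ij: "i = t0 + 1 + j" "j < t2" using 3 i by (auto simp: j_def T_def)
      have "run orc Mred inw i = (step orc Mred ^^ j) q1"
        using R0 sq unfolding run_def ij(1) funpow_split3 reach_def by simp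
      then show ?thesis using R2 ij(2) st unfolding reach_def by auto
    qed
  qed
  show ?thesis
    using runT qs rd t0 t2 unfolding T_def by (intro exI[of _ T]) (simp add: cstate_def cwork_def T_def)
qed

end

lemma bound:
  fixes n k :: nat assumes k1: "1 \<le> k"
  shows "(n + 1) + (k + 1 + n * n + 1) + (n * n + 1 + k + 1 + k + 1) + (n + k + 2) +
     (n * (n * (2 * n + 2 * k + 2 * (n * n) + 7) + 1 + n * (2 * n + 2) + (3 * n + 3)) + 4) + 1 + (2 * n + 2)
     \<le> k * (n + k + 2 + n * n) ^ 7"
proof -
  define L where "L = n + k + 2 + n * n"
  define P2 where "P2 = L * L"
  define P3 where "P3 = L * P2"
  have hn: "n \<le> L" and hk: "k \<le> L" and hnn: "n * n \<le> L" and L3: "3 \<le> L" using k1 by (auto simp: L_def)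
  have a1: "2 * n + 2 * k + 2 * (n * n) + 7 \<le> 5 * L" using L3 by (simp add: L_def)
  have a2: "n * (2 * n + 2 * k + 2 * (n * n) + 7) \<le> 5 * P2"
    using mult_le_mono[OF hn a1] by (simp add: P2_def)
  have a3': "2 * n + 2 \<le> 4 * L" using hn L3 by linarith
  have a3: "n * (2 * n + 2) \<le> 4 * P2"
    using mult_le_mono[OF hn a3'] by (simp add: P2_def)
  have p2: "3 * L \<le> P2" unfolding P2_def using mult_le_mono1[OF L3, of L] by simp
  have br: "n * (2 * n + 2 * k + 2 * (n * n) + 7) + 1 + n * (2 * n + 2) + (3 * n + 3) \<le> 11 * P2"
    using a2 a3 p2 hn L3 by linarith
  have b2: "n * (n * (2 * n + 2 * k + 2 * (n * n) + 7) + 1 + n * (2 * n + 2) + (3 * n + 3)) \<le> 11 * P3"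
    using mult_le_mono[OF hn br] by (simp add: P3_def)
  have p3: "3 * P2 \<le> P3" unfolding P3_def using mult_le_mono1[OF L3, of P2] by simp
  have s: "(n + 1) + (k + 1 + n * n + 1) + (n * n + 1 + k + 1 + k + 1) + (n + k + 2) +
     (n * (n * (2 * n + 2 * k + 2 * (n * n) + 7) + 1 + n * (2 * n + 2) + (3 * n + 3)) + 4) + 1 + (2 * n + 2) \<le> 81 * P3"
    using b2 p3 p2 hn hk hnn L3 by linarith
  have "(81::nat) = 3 ^ 4" by simp
  also have "\<dots> \<le> L ^ 4" using L3 by (rule power_mono) simp
  finally have "81 * P3 \<le> L ^ 4 * P3" by simp
  also have "L ^ 4 * P3 = L ^ 7" by (simp add: P3_def P2_def power_def)
  also have "L ^ 7 \<le> k * L ^ 7" using k1 by simp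
  finally show ?thesis using s by (simp add: L_def)
qed

definition Mid :: otm where
  "Mid = \<lparr> nstates = 1, nsyms = 3, start = 0, halt = 0, qry = 0, ans = 0, delta = (\<lambda>_ _ _. (0, 0, 0, 0, 0)) \<rparr>"

lemma computable_id: "computable id"
  unfolding computable_def
proof (intro exI[of _ Mid] conjI allI)
  show "wf_otm Mid" by (simp add: wf_otm_def Mid_def)
  fix m
  show "\<exists>t. cstate (run (\<lambda>_. []) Mid (bin m) t) = halt Mid \<and>
          read_tape (cwork (run (\<lambda>_. []) Mid (bin m) t)) = bin (id m)"
    by (intro exI[of _ 0]) (simp add: run_def init_config_def cstate_def cwork_def Mid_def)
qed

lemma enc_par:
  assumes "y \<in> inst LeftBIS" "enc LeftBIS y = enc LeftBIS (a, b, F, l)"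
  shows "par LeftBIS y = l"
proof -
  obtain a' b' F' l' where y: "y = (a', b', F', l')" by (cases y) auto
  have "un a' @ un b' @ un l' @ map (\<lambda>p. p \<in> F') (List.product [0..<a'] [0..<b'])
      = un a @ un b @ un l @ map (\<lambda>p. p \<in> F) (List.product [0..<a] [0..<b])"
    using assms(2) by (simp add: y LeftBIS_def)
  then have "l' = l" by (metis un_app_inj)
  then show ?thesis by (simp add: y LeftBIS_def)
qed

theorem theorem5:
  shows "sharpW2_hard LeftBIS"
  unfolding sharpW2_hard_def fpt_turing_red_def
proof (rule exI[of _ Mred], rule exI[of _ id], rule exI[of _ 7], rule exI[of _ id], intro conjI allI impI ballI)
  show "wf_otm Mred" by (rule wf_Mred)
  show "computable id" by (rule computable_id)
  show "computable id" by (rule computable_id)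
  fix orc x
  assume orc: "is_oracle LeftBIS orc" and x: "x \<in> inst DomSet"
  obtain n E k where xe: "x = (n, E, k)" by (cases x) auto
  have k1: "1 \<le> k" using x by (simp add: xe DomSet_def)
  interpret red n k E orc .
  have encx: "enc DomSet x = inw" by (simp add: xe DomSet_def inw_def)
  have parx: "par DomSet x = k" by (simp add: xe DomSet_def)
  have solx: "sol DomSet x = cnt mod 2 ^ n"
    using dom_count[OF k1, of n E] by (simp add: xe DomSet_def cnt_def LeftBIS_def)
  obtain t where t: "t \<le> (n + 1) + (k + 1 + n * n + 1) + (n * n + 1 + k + 1 + k + 1) + (n + k + 2) + (n * BR + 4) + 1 + (2 * n + 2)"
    and h: "cstate (run orc Mred inw t) = 26" and o: "read_tape (cwork (run orc Mred inw t)) = strip (take n (bin cnt))"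
    and q: "\<forall>i<t. cstate (run orc Mred inw i) = 23 \<longrightarrow> read_tape (coracle (run orc Mred inw i)) = qw"
    using main[OF orc] by blast
  have tb: "t \<le> id (par DomSet x) * length (enc DomSet x) ^ 7"
    using order.trans[OF t[unfolded BR_def] bound[OF k1, of n]] by (simp add: encx parx inw_len)
  show "\<exists>t. t \<le> id (par DomSet x) * length (enc DomSet x) ^ 7 \<and>
          cstate (run orc Mred (enc DomSet x) t) = halt Mred \<and>
          read_tape (cwork (run orc Mred (enc DomSet x) t)) = bin (sol DomSet x) \<and>
          (\<forall>i<t. cstate (run orc Mred (enc DomSet x) i) = qry Mred \<longrightarrow>
             (\<forall>y\<in>inst LeftBIS. read_tape (coracle (run orc Mred (enc DomSet x) i)) = enc LeftBIS y \<longrightarrow>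
                 par LeftBIS y \<le> id (par DomSet x)))"
  proof (intro exI[of _ t] conjI allI impI ballI)
    show "t \<le> id (par DomSet x) * length (enc DomSet x) ^ 7" by (rule tb)
    show "cstate (run orc Mred (enc DomSet x) t) = halt Mred" using h by (simp add: encx)
    show "read_tape (cwork (run orc Mred (enc DomSet x) t)) = bin (sol DomSet x)"
      using o by (simp add: encx solx bin_mod)
    fix i y assume i: "i < t" and st: "cstate (run orc Mred (enc DomSet x) i) = qry Mred"
      and y: "y \<in> inst LeftBIS" and ye: "read_tape (coracle (run orc Mred (enc DomSet x) i)) = enc LeftBIS y"
    have "read_tape (coracle (run orc Mred (enc DomSet x) i)) = qw" using q i st by (simp add: encx)
    then have "enc LeftBIS y = enc LeftBIS (n, n * n, Ecl n E, k)" using ye qw_enc by simp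
    then show "par LeftBIS y \<le> id (par DomSet x)" using enc_par[OF y] parx by simp
  qed
qed


end
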